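(* Let $q\ge 1$ and let $P\in\mathcal{P}_q$ be a probability measure on $\mathbb{R}^D$. For a sequence of probability measures $Q_1,Q_2,\dots\in\mathcal{P}_q$, the following are equivalent: (a) $d_{\mathcal{F}_q}(Q_n,P)\to 0$ as $n\to\infty$; (b) $Q_n$ converges weakly to $P$ and $\mathbb{E}_{X\sim Q_n}[\|X\|_2^q]\to\mathbb{E}_{X\sim P}[\|X\|_2^q]$ as $n\to\infty$.
   Context: $\|\cdot\|_2$ is the Euclidean norm. For a real tensor $T$ of order $L$, $\|T\|_{\mathrm{op}}=\sup_{\|u^{(l)}\|_2=1}|\langle T,u^{(1)}\otimes\cdots\otimes u^{(L)}\rangle|$ (for vectors this is the Euclidean norm). $\nabla^i f$ denotes the tensor of $i$-th order partial derivatives. A function $h:\mathbb{R}^D\to\mathbb{R}$ is pseudo-Lipschitz of order $r\ge 0$ if there is $C>0$ with $|h(x)-h(y)|\le C(1+\|x\|_2^r+\|y\|_2^r)\|x-y\|_2$ for all $x,y$; the smallest such $C$ is denoted $\tilde\mu_{\mathrm{pLip}}(h)_{1,r}$. Define $\mathcal{F}_q=\{f:\mathbb{R}^D\to\mathbb{R}:\ f\in C^3,\ \tilde\mu_{\mathrm{pLip}}(f)_{1,q-1}\le 1,\ \sup_x\|\nabla^i f(x)\|_{\mathrm{op}}/(1+\|x\|_2^{q-1})\le 1 \text{ for } i\in\{2,3\}\}$ and $d_{\mathcal{F}_q}(P,Q)=\sup_{f\in\mathcal{F}_q}|\mathbb{E}_{X\sim P}[f(X)]-\mathbb{E}_{Y\sim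 Q}[f(Y)]|$. $\mathcal{P}_q$ is the set of probability measures $\mu$ on $\mathbb{R}^D$ with $\int\|x\|_2^q\,d\mu(x)<\infty$. *)

theory Defs
  imports "HOL-Analysis.Analysis" "HOL-Probability.Probability"
begin

text \<open>Power t^r for t \<ge> 0 and real r \<ge> 0, with the usual convention 0^0 = 1
  (Isabelle's powr has 0 powr 0 = 0).\<close>
definition npow :: "real \<Rightarrow> real \<Rightarrow> real" where
  "npow t r = (if t = 0 then (if r = 0 then 1 else 0) else t powr r)"

definition pseudo_lipschitz :: "real \<Rightarrow> real \<Rightarrow> ('a::real_normed_vector \<Rightarrow> real) \<Rightarrow> bool" where
  "pseudo_lipschitz r C h \<longleftrightarrow>
     (\<forall>x y. \<bar>h x - h y\<bar> \<le> C * (1 + npow (norm x) r + npow (norm y) r) * norm (x - y))"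

text \<open>The class F_q.  f is C^3 with derivatives f1, f2, f3 (as nested bounded linear maps;
  the norm of the nested bounded linear map f_i x is exactly the operator norm of the
  tensor of i-th partial derivatives).  The condition that the smallest pseudo-Lipschitz
  constant of order q-1 is at most 1 is equivalent to the inequality holding with C = 1.\<close>
definition F_class :: "real \<Rightarrow> ('a::euclidean_space \<Rightarrow> real) set" where
  "F_class q = {f. \<exists>(f1 :: 'a \<Rightarrow> ('a \<Rightarrow>\<^sub>L real)) f2 f3.
        (\<forall>x. (f has_derivative blinfun_apply (f1 x)) (at x)) \<and>
        (\<forall>x. (f1 has_derivative blinfun_apply (f2 x)) (at x)) \<and>
        (\<forall>x. (f2 has_derivative blinfun_apply (f3 x)) (at x)) \<and>
        continuous_on UNIV f3 \<and>
        pseudo_lipschitz (q - 1) 1 f \<and>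
        (\<forall>x. norm (f2 x) \<le> 1 + npow (norm x) (q - 1)) \<and>
        (\<forall>x. norm (f3 x) \<le> 1 + npow (norm x) (q - 1))}"

definition d_F :: "real \<Rightarrow> 'a::euclidean_space measure \<Rightarrow> 'a measure \<Rightarrow> real" where
  "d_F q P Q = (SUP f \<in> F_class q. \<bar>(\<integral>x. f x \<partial>P) - (\<integral>y. f y \<partial>Q)\<bar>)"

definition P_class :: "real \<Rightarrow> ('a::euclidean_space) measure set" where
  "P_class q = {M. prob_space M \<and> sets M = sets borel \<and>
                   integrable M (\<lambda>x. norm x powr q)}"

definition weak_conv :: "(nat \<Rightarrow> 'a::topological_space measure) \<Rightarrow> 'a measure \<Rightarrow> bool" where
  "weak_conv Q P \<longleftrightarrow> (\<forall>f :: 'a \<Rightarrow> real. continuous_on UNIV f \<and> bounded (range f) \<longrightarrow>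
       (\<lambda>n. \<integral>x. f x \<partial>Q n) \<longlonglongrightarrow> (\<integral>x. f x \<partial>P))"

end

theory Submission
  imports Defs
begin


lemma npow_nonneg: "npow t r \<ge> 0"
  by (simp add: npow_def)

lemma npow_zero_exp: "npow t 0 = 1"
  by (simp add: npow_def)

lemma npow_mono: assumes "0 \<le> a" "a \<le> b" "0 \<le> r" shows "npow a r \<le> npow b r"
  using assms by (auto simp: npow_def powr_mono2)

lemma npow_mult: assumes "0 \<le> a" "0 \<le> b" "0 \<le> r" shows "npow (a*b) r = npow a r * npow b r"
  using assms by (auto simp: npow_def powr_mult)

lemma ridge_deriv:
  fixes C :: "'b::real_normed_vector" and t x :: "'a::real_inner"
  assumes "(\<phi> has_real_derivative D) (at (t \<bullet> x))"
  shows "((\<lambda>y. \<phi> (t \<bullet> y) *\<^sub>R C) has_derivative (\<lambda>v. (D * (t \<bullet> v)) *\<^sub>R C)) (at x)"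
proof -
  have 1: "((\<lambda>y. t \<bullet> y) has_derivative (\<lambda>v. t \<bullet> v)) (at x)"
    by (rule bounded_linear.has_derivative[OF bounded_linear_inner_right]) (rule has_derivative_ident)
  have 2: "(\<phi> has_derivative (*) D) (at (t \<bullet> x))"
    using assms by (simp add: has_field_derivative_def)
  have 3: "((\<lambda>y. \<phi> (t \<bullet> y)) has_derivative (\<lambda>v. D * (t \<bullet> v))) (at x)"
    using has_derivative_compose[OF 1 2] by (simp add: o_def)
  show ?thesis
    using has_derivative_scaleR_left[OF 3, of C] by simp
qed

lemma mvt_growth:
  fixes \<psi>0 \<psi>1 :: "real \<Rightarrow> real"
  assumes d: "\<And>s. (\<psi>0 has_real_derivative \<psi>1 s) (at s)"
    and g: "\<And>s. \<bar>\<psi>1 s\<bar> \<le> B * (1 + npow \<bar>s\<bar> r)" and r: "r \<ge> 0" and B: "B \<ge> 0"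
  shows "\<bar>\<psi>0 a - \<psi>0 b\<bar> \<le> B * (1 + npow \<bar>a\<bar> r + npow \<bar>b\<bar> r) * \<bar>a - b\<bar>"
proof -
  have main: "\<bar>\<psi>0 a - \<psi>0 b\<bar> \<le> B * (1 + npow \<bar>a\<bar> r + npow \<bar>b\<bar> r) * \<bar>a - b\<bar>" if ab: "a < b" for a b
  proof -
    obtain z where z: "a < z" "z < b" "\<psi>0 b - \<psi>0 a = (b - a) * \<psi>1 z"
      using MVT2[OF ab, of \<psi>0 \<psi>1] d by blast
    have "\<bar>z\<bar> \<le> max \<bar>a\<bar> \<bar>b\<bar>" using z by auto
    hence "npow \<bar>z\<bar> r \<le> npow (max \<bar>a\<bar> \<bar>b\<bar>) r" using npow_mono r by auto
    also have "\<dots> \<le> npow \<bar>a\<bar> r + npow \<bar>b\<bar> r"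
      using npow_nonneg[of "\<bar>a\<bar>" r] npow_nonneg[of "\<bar>b\<bar>" r] by (simp add: max_def)
    finally have nz: "npow \<bar>z\<bar> r \<le> npow \<bar>a\<bar> r + npow \<bar>b\<bar> r" .
    have "\<bar>\<psi>0 a - \<psi>0 b\<bar> = \<bar>\<psi>1 z\<bar> * \<bar>a - b\<bar>"
    proof -
      have "\<psi>0 a - \<psi>0 b = \<psi>1 z * (a - b)" using z(3) by (simp add: algebra_simps)
      thus ?thesis by (simp add: abs_mult)
    qed
    also have "\<dots> \<le> B * (1 + npow \<bar>a\<bar> r + npow \<bar>b\<bar> r) * \<bar>a - b\<bar>"
    proof (rule mult_right_mono)
      show "\<bar>\<psi>1 z\<bar> \<le> B * (1 + npow \<bar>a\<bar> r + npow \<bar>b\<bar> r)"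
        using g[of z] nz B by (smt (verit) mult_left_mono)
    qed simp
    finally show ?thesis .
  qed
  show ?thesis
  proof (cases a b rule: linorder_cases)
    case less then show ?thesis by (rule main)
  next
    case equal then show ?thesis by simp
  next
    case greater
    from main[OF greater] show ?thesis
      by (simp add: abs_minus_commute add.commute add.left_commute)
  qed
qed

lemma norm_blinfun_inner_left_le: "norm (blinfun_inner_left t) \<le> norm (t::'a::real_inner)"
  by (rule norm_blinfun_bound) (auto simp: Cauchy_Schwarz_ineq2 mult.commute)

lemma norm_blinfun_scaleR_left_le: "norm (blinfun_scaleR_left a) \<le> norm a"
  by (rule norm_blinfun_bound) (auto simp: mult.commute)

lemma ridge_F:
  fixes t :: "'a::euclidean_space" and \<psi>0 \<psi>1 \<psi>2 \<psi>3 :: "real \<Rightarrow> real"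
  assumes q: "q \<ge> 1"
    and d0: "\<And>s. (\<psi>0 has_real_derivative \<psi>1 s) (at s)"
    and d1: "\<And>s. (\<psi>1 has_real_derivative \<psi>2 s) (at s)"
    and d2: "\<And>s. (\<psi>2 has_real_derivative \<psi>3 s) (at s)"
    and c3: "continuous_on UNIV \<psi>3"
    and B: "B \<ge> 0"
    and g1: "\<And>s. \<bar>\<psi>1 s\<bar> \<le> B * (1 + npow \<bar>s\<bar> (q - 1))"
    and g2: "\<And>s. \<bar>\<psi>2 s\<bar> \<le> B * (1 + npow \<bar>s\<bar> (q - 1))"
    and g3: "\<And>s. \<bar>\<psi>3 s\<bar> \<le> B * (1 + npow \<bar>s\<bar> (q - 1))"
  shows "\<exists>c>0. (\<lambda>x. c * \<psi>0 (t \<bullet> x)) \<in> F_class q"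
proof -
  define r where "r = q - 1"
  have r: "r \<ge> 0" using q r_def by simp
  define L1 where "L1 = blinfun_inner_left t"
  define L2 where "L2 = blinfun_scaleR_left L1 o\<^sub>L L1"
  define L3 where "L3 = blinfun_scaleR_left L2 o\<^sub>L L1"
  have nL1: "norm L1 \<le> norm t" unfolding L1_def by (rule norm_blinfun_inner_left_le)
  have nL2: "norm L2 \<le> norm t ^ 2"
  proof -
    have "norm L2 \<le> norm (blinfun_scaleR_left L1) * norm L1" unfolding L2_def by (rule norm_blinfun_compose)
    also have "\<dots> \<le> norm L1 * norm L1" by (rule mult_right_mono[OF norm_blinfun_scaleR_left_le]) simp
    also have "\<dots> \<le> norm t * norm t" using nL1 by (simp add: mult_mono')
    finally show ?thesis by (simp add: power2_eq_square)
  qed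
  have nL3: "norm L3 \<le> norm t ^ 3"
  proof -
    have "norm L3 \<le> norm (blinfun_scaleR_left L2) * norm L1" unfolding L3_def by (rule norm_blinfun_compose)
    also have "\<dots> \<le> norm L2 * norm L1" by (rule mult_right_mono[OF norm_blinfun_scaleR_left_le]) simp
    also have "\<dots> \<le> norm t ^ 2 * norm t" using nL1 nL2 by (simp add: mult_mono')
    finally show ?thesis by (simp add: power3_eq_cube power2_eq_square)
  qed
  define T where "T = (1 + norm t) ^ 3"
  have b1: "1 + norm t \<ge> 1" by simp
  have T1: "norm t \<le> T"
  proof -
    have "norm t \<le> (1 + norm t) ^ 1" by simp
    also have "\<dots> \<le> (1 + norm t) ^ 3" by (rule power_increasing[OF _ b1]) simp
    finally show ?thesis by (simp add: T_def)
  qed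
  have T2: "norm t ^ 2 \<le> T"
  proof -
    have "norm t ^ 2 \<le> (1 + norm t) ^ 2" by (rule power_mono) auto
    also have "\<dots> \<le> (1 + norm t) ^ 3" by (rule power_increasing[OF _ b1]) simp
    finally show ?thesis by (simp add: T_def)
  qed
  have T3: "norm t ^ 3 \<le> T" unfolding T_def by (simp add: power_mono)
  have T0: "T \<ge> 0" unfolding T_def by simp
  define K where "K = 1 + npow (norm t) r"
  have K1: "K \<ge> 1" unfolding K_def using npow_nonneg by simp
  have Kb2: "npow \<bar>t \<bullet> x\<bar> r \<le> K * npow (norm x) r" for x
  proof -
    have "npow \<bar>t \<bullet> x\<bar> r \<le> npow (norm t * norm x) r"
      by (rule npow_mono) (auto simp: Cauchy_Schwarz_ineq2 r)
    also have "\<dots> = npow (norm t) r * npow (norm x) r" by (rule npow_mult) (auto simp: r)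
    finally show ?thesis unfolding K_def using npow_nonneg[of "norm t" r] npow_nonneg[of "norm x" r]
      by (simp add: algebra_simps)
  qed
  have Kbound: "1 + npow \<bar>t \<bullet> x\<bar> r \<le> K * (1 + npow (norm x) r)" for x
    using Kb2[of x] K1 by (simp add: algebra_simps)
  define c where "c = 1 / (B * K * T + 1)"
  have BKT: "B * K * T \<ge> 0" using B K1 T0 by simp
  have c0: "c > 0" unfolding c_def using BKT by simp
  have cB: "c * (B * K * T) \<le> 1" unfolding c_def using BKT by (simp add: field_simps)
  have gen: "\<bar>c * \<psi>k (t \<bullet> x)\<bar> * norm t ^ k \<le> 1 + npow (norm x) r"
    if gk: "\<And>s. \<bar>\<psi>k s\<bar> \<le> B * (1 + npow \<bar>s\<bar> r)" and k: "norm t ^ k \<le> T" for \<psi>k :: "real \<Rightarrow> real" and k x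
  proof -
    have "\<bar>c * \<psi>k (t \<bullet> x)\<bar> * norm t ^ k \<le> c * (B * (K * (1 + npow (norm x) r))) * T"
    proof -
      have p: "\<bar>\<psi>k (t \<bullet> x)\<bar> \<le> B * (K * (1 + npow (norm x) r))"
        using gk[of "t \<bullet> x"] mult_left_mono[OF Kbound[of x] B] by linarith
      have "0 \<le> B * (K * (1 + npow (norm x) r))" using B K1 npow_nonneg[of "norm x" r] by simp
      hence "\<bar>c * \<psi>k (t \<bullet> x)\<bar> \<le> c * (B * (K * (1 + npow (norm x) r)))"
        using p c0 by (simp add: abs_mult)
      thus ?thesis using k c0 \<open>0 \<le> B * (K * (1 + npow (norm x) r))\<close> by (intro mult_mono) auto
    qed
    also have "\<dots> = c * (B * K * T) * (1 + npow (norm x) r)" by (simp add: algebra_simps)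
    also have "\<dots> \<le> 1 * (1 + npow (norm x) r)"
      using cB npow_nonneg[of "norm x" r] by (intro mult_right_mono) auto
    finally show ?thesis by simp
  qed
  define f1 where "f1 = (\<lambda>x. (c * \<psi>1 (t \<bullet> x)) *\<^sub>R L1)"
  define f2 where "f2 = (\<lambda>x. (c * \<psi>2 (t \<bullet> x)) *\<^sub>R L2)"
  define f3 where "f3 = (\<lambda>x. (c * \<psi>3 (t \<bullet> x)) *\<^sub>R L3)"
  have D0: "((\<lambda>x. c * \<psi>0 (t \<bullet> x)) has_derivative blinfun_apply (f1 x)) (at x)" for x
  proof -
    have "((\<lambda>y. \<psi>0 (t \<bullet> y) *\<^sub>R c) has_derivative (\<lambda>v. (\<psi>1 (t \<bullet> x) * (t \<bullet> v)) *\<^sub>R c)) (at x)"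
      by (rule ridge_deriv[OF d0])
    moreover have "blinfun_apply (f1 x) = (\<lambda>v. (\<psi>1 (t \<bullet> x) * (t \<bullet> v)) *\<^sub>R c)"
      by (intro ext) (simp add: f1_def L1_def inner_commute blinfun.scaleR_left)
    ultimately show ?thesis by (simp add: mult.commute)
  qed
  have D1: "(f1 has_derivative blinfun_apply (f2 x)) (at x)" for x
  proof -
    have "((\<lambda>y. \<psi>1 (t \<bullet> y) *\<^sub>R (c *\<^sub>R L1)) has_derivative (\<lambda>v. (\<psi>2 (t \<bullet> x) * (t \<bullet> v)) *\<^sub>R (c *\<^sub>R L1))) (at x)"
      by (rule ridge_deriv[OF d1])
    moreover have "blinfun_apply (f2 x) = (\<lambda>v. (\<psi>2 (t \<bullet> x) * (t \<bullet> v)) *\<^sub>R (c *\<^sub>R L1))"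
      by (intro ext) (simp add: f2_def L2_def L1_def inner_commute blinfun.scaleR_left)
    moreover have "f1 = (\<lambda>y. \<psi>1 (t \<bullet> y) *\<^sub>R (c *\<^sub>R L1))" by (auto simp: f1_def mult.commute)
    ultimately show ?thesis by simp
  qed
  have D2: "(f2 has_derivative blinfun_apply (f3 x)) (at x)" for x
  proof -
    have "((\<lambda>y. \<psi>2 (t \<bullet> y) *\<^sub>R (c *\<^sub>R L2)) has_derivative (\<lambda>v. (\<psi>3 (t \<bullet> x) * (t \<bullet> v)) *\<^sub>R (c *\<^sub>R L2))) (at x)"
      by (rule ridge_deriv[OF d2])
    moreover have "blinfun_apply (f3 x) = (\<lambda>v. (\<psi>3 (t \<bullet> x) * (t \<bullet> v)) *\<^sub>R (c *\<^sub>R L2))"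
      by (intro ext) (simp add: f3_def L3_def L1_def inner_commute blinfun.scaleR_left)
    moreover have "f2 = (\<lambda>y. \<psi>2 (t \<bullet> y) *\<^sub>R (c *\<^sub>R L2))" by (auto simp: f2_def mult.commute)
    ultimately show ?thesis by simp
  qed
  have C3: "continuous_on UNIV f3"
    unfolding f3_def
    by (intro continuous_intros continuous_on_compose2[OF c3]) auto
  have N2: "norm (f2 x) \<le> 1 + npow (norm x) (q - 1)" for x
  proof -
    have "norm (f2 x) = \<bar>c * \<psi>2 (t \<bullet> x)\<bar> * norm L2" by (simp add: f2_def)
    also have "\<dots> \<le> \<bar>c * \<psi>2 (t \<bullet> x)\<bar> * norm t ^ 2" by (rule mult_left_mono[OF nL2]) simp
    also have "\<dots> \<le> 1 + npow (norm x) r" by (rule gen[OF _ T2]) (use g2 r_def in auto)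
    finally show ?thesis by (simp add: r_def)
  qed
  have N3: "norm (f3 x) \<le> 1 + npow (norm x) (q - 1)" for x
  proof -
    have "norm (f3 x) = \<bar>c * \<psi>3 (t \<bullet> x)\<bar> * norm L3" by (simp add: f3_def)
    also have "\<dots> \<le> \<bar>c * \<psi>3 (t \<bullet> x)\<bar> * norm t ^ 3" by (rule mult_left_mono[OF nL3]) simp
    also have "\<dots> \<le> 1 + npow (norm x) r" by (rule gen[OF _ T3]) (use g3 r_def in auto)
    finally show ?thesis by (simp add: r_def)
  qed
  have PL: "pseudo_lipschitz (q - 1) 1 (\<lambda>x. c * \<psi>0 (t \<bullet> x))"
    unfolding pseudo_lipschitz_def
  proof (intro allI)
    fix x y :: 'a
    have g1': "\<And>s. \<bar>\<psi>1 s\<bar> \<le> B * (1 + npow \<bar>s\<bar> r)" using g1 r_def by auto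
    have m: "\<bar>\<psi>0 (t \<bullet> x) - \<psi>0 (t \<bullet> y)\<bar> \<le> B * (1 + npow \<bar>t \<bullet> x\<bar> r + npow \<bar>t \<bullet> y\<bar> r) * \<bar>t \<bullet> x - t \<bullet> y\<bar>"
      by (rule mvt_growth[OF d0 g1' r B])
    have a: "1 + npow \<bar>t \<bullet> x\<bar> r + npow \<bar>t \<bullet> y\<bar> r \<le> K * (1 + npow (norm x) r + npow (norm y) r)"
      using Kb2[of x] Kb2[of y] K1 by (simp add: algebra_simps)
    have b: "\<bar>t \<bullet> x - t \<bullet> y\<bar> \<le> T * norm (x - y)"
      using Cauchy_Schwarz_ineq2[of t "x - y"] T1
      by (simp add: inner_diff_right) (meson mult_right_mono norm_ge_zero order_trans)
    let ?A = "1 + npow (norm x) r + npow (norm y) r"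
    have A0: "?A \<ge> 0" using npow_nonneg[of "norm x" r] npow_nonneg[of "norm y" r] by simp
    have "\<bar>c * \<psi>0 (t \<bullet> x) - c * \<psi>0 (t \<bullet> y)\<bar> = c * \<bar>\<psi>0 (t \<bullet> x) - \<psi>0 (t \<bullet> y)\<bar>"
      using c0 by (simp add: right_diff_distrib[symmetric] abs_mult)
    also have "\<dots> \<le> c * (B * (K * ?A) * (T * norm (x - y)))"
      using m a b c0 B A0 K1
      by (intro mult_left_mono order_trans[OF m] mult_mono) (auto intro!: mult_left_mono)
    also have "\<dots> = (c * (B * K * T)) * (?A * norm (x - y))" by (simp add: algebra_simps)
    also have "\<dots> \<le> 1 * (?A * norm (x - y))"
      using cB A0 by (intro mult_right_mono) auto
    finally show "\<bar>c * \<psi>0 (t \<bullet> x) - c * \<psi>0 (t \<bullet> y)\<bar> \<le> 1 * (1 + npow (norm x) (q - 1) + npow (norm y) (q - 1)) * norm (x - y)"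
      by (simp add: r_def)
  qed
  show ?thesis
    using c0 D0 D1 D2 C3 PL N2 N3 unfolding F_class_def by blast
qed


lemma PC_prob: "M \<in> P_class q \<Longrightarrow> prob_space M"
  by (simp add: P_class_def)

lemma PC_sets: "M \<in> P_class q \<Longrightarrow> sets M = sets borel"
  by (simp add: P_class_def)

lemma PC_int: "M \<in> P_class q \<Longrightarrow> integrable M (\<lambda>x. norm x powr q)"
  by (simp add: P_class_def)

lemma meas_cont:
  assumes "sets M = sets borel" "continuous_on UNIV f"
  shows "f \<in> borel_measurable M"
  using borel_measurable_continuous_onI[OF assms(2)] measurable_cong_sets[OF assms(1) refl] by blast

lemma integrable_growth:
  fixes f :: "'a::euclidean_space \<Rightarrow> real"
  assumes M: "M \<in> P_class q" and fm: "f \<in> borel_measurable M"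
    and b: "\<And>x. \<bar>f x\<bar> \<le> a + b * norm x powr q"
  shows "integrable M f"
proof -
  interpret prob_space M using PC_prob[OF M] .
  have "integrable M (\<lambda>x. a + b * norm x powr q)"
    using PC_int[OF M] by (intro Bochner_Integration.integrable_add integrable_mult_right) auto
  then show ?thesis
    by (rule Bochner_Integration.integrable_bound) (use fm b in \<open>auto intro: order_trans[OF _ abs_ge_self]\<close>)
qed

lemma integrable_bdd_cont:
  fixes f :: "'a::euclidean_space \<Rightarrow> real"
  assumes M: "M \<in> P_class q" and c: "continuous_on UNIV f" and b: "\<And>x. \<bar>f x\<bar> \<le> a"
  shows "integrable M f"
proof -
  interpret prob_space M using PC_prob[OF M] .
  show ?thesis
    by (rule Bochner_Integration.integrable_bound[of _ "\<lambda>x. a"]) (use meas_cont[OF PC_sets[OF M] c] b in \<open>auto intro: order_trans[OF _ abs_ge_self]\<close>)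
qed

lemma cont_norm_powr: assumes "q > 0" shows "continuous_on UNIV (\<lambda>x::'a::real_normed_vector. norm x powr q)"
  by (rule continuous_on_powr') (use assms in \<open>auto intro: continuous_intros\<close>)

lemma norm_le_powr: assumes "q \<ge> 1" shows "norm x \<le> 1 + norm x powr q"
proof (cases "norm x \<le> 1")
  case True
  have "0 \<le> norm x powr q" by simp
  with True show ?thesis by linarith
next
  case False
  hence "norm x powr 1 \<le> norm x powr q" using assms by (intro powr_mono) auto
  then show ?thesis using False by simp
qed

lemma F_props:
  assumes "f \<in> F_class q"
  shows "continuous_on UNIV f"
    and "\<And>x y. \<bar>f x - f y\<bar> \<le> (1 + npow (norm x) (q - 1) + npow (norm y) (q - 1)) * norm (x - y)"
proof -
  obtain f1 where d: "\<And>x. (f has_derivative blinfun_apply (f1 x)) (at x)"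
    using assms unfolding F_class_def by blast
  show "continuous_on UNIV f"
    using d by (meson continuous_at_imp_continuous_on has_derivative_continuous)
  show "\<And>x y. \<bar>f x - f y\<bar> \<le> (1 + npow (norm x) (q - 1) + npow (norm y) (q - 1)) * norm (x - y)"
    using assms unfolding F_class_def pseudo_lipschitz_def by auto
qed

lemma npow_times: assumes "r \<ge> 0" shows "npow (norm x) r * norm x = norm x powr (r + 1)"
proof (cases "x = 0")
  case True then show ?thesis by (simp add: npow_def)
next
  case False then show ?thesis using assms by (simp add: npow_def powr_add)
qed

lemma F_growth0:
  assumes "f \<in> F_class q" "q \<ge> 1"
  shows "\<bar>f x - f 0\<bar> \<le> 2 * norm x + norm x powr q"
proof -
  have "\<bar>f x - f 0\<bar> \<le> (1 + npow (norm x) (q - 1) + npow (norm (0::'a)) (q - 1)) * norm (x - 0)"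
    by (rule F_props(2)[OF assms(1)])
  also have "\<dots> = norm x + npow (norm x) (q - 1) * norm x + npow 0 (q - 1) * norm x"
    by (simp add: algebra_simps)
  also have "\<dots> \<le> norm x + norm x powr q + 1 * norm x"
    using npow_times[of "q - 1" x] assms(2) by (intro add_mono mult_right_mono) (auto simp: npow_def)
  finally show ?thesis by simp
qed

lemma F_integrable:
  assumes "f \<in> F_class q" "q \<ge> 1" "M \<in> P_class q"
  shows "integrable M f"
proof (rule integrable_growth[OF assms(3)])
  show "f \<in> borel_measurable M" by (rule meas_cont[OF PC_sets[OF assms(3)] F_props(1)[OF assms(1)]])
  fix x :: 'a
  have "\<bar>f x\<bar> \<le> \<bar>f 0\<bar> + (2 * norm x + norm x powr q)"
    using F_growth0[OF assms(1,2), of x] by linarith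
  also have "\<dots> \<le> (\<bar>f 0\<bar> + 2) + 3 * norm x powr q"
    using norm_le_powr[OF assms(2), of x] by linarith
  finally show "\<bar>f x\<bar> \<le> (\<bar>f 0\<bar> + 2) + 3 * norm x powr q" .
qed

definition Gq :: "real \<Rightarrow> 'a::euclidean_space \<Rightarrow> real" where
  "Gq q x = 2 * norm x + norm x powr q"

lemma Gq_integrable: assumes "q \<ge> 1" "M \<in> P_class q" shows "integrable M (Gq q)"
  unfolding Gq_def
proof (rule integrable_growth[OF assms(2)])
  show "(\<lambda>x. 2 * norm x + norm x powr q) \<in> borel_measurable M"
    by (rule meas_cont[OF PC_sets[OF assms(2)]]) (intro continuous_on_add continuous_on_mult continuous_on_const continuous_on_norm continuous_on_id cont_norm_powr, use assms(1) in auto)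
  fix x :: 'a
  have "0 \<le> norm x powr q" by simp
  then show "\<bar>2 * norm x + norm x powr q\<bar> \<le> 2 + 3 * norm x powr q"
    using norm_le_powr[OF assms(1), of x] by simp
qed

lemma F_diff_bound:
  assumes "f \<in> F_class q" "q \<ge> 1" "Q \<in> P_class q" "P \<in> P_class q"
  shows "\<bar>(\<integral>x. f x \<partial>Q) - (\<integral>x. f x \<partial>P)\<bar> \<le> (\<integral>x. Gq q x \<partial>Q) + (\<integral>x. Gq q x \<partial>P)"
proof -
  have one: "\<bar>(\<integral>x. f x \<partial>M) - f 0\<bar> \<le> (\<integral>x. Gq q x \<partial>M)" if M: "M \<in> P_class q" for M
  proof -
    interpret prob_space M using PC_prob[OF M] .
    have fi: "integrable M f" by (rule F_integrable[OF assms(1,2) M])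
    have "(\<integral>x. f x \<partial>M) - f 0 = (\<integral>x. f x - f 0 \<partial>M)"
      using fi by (simp add: prob_space)
    also have "\<bar>\<dots>\<bar> \<le> (\<integral>x. \<bar>f x - f 0\<bar> \<partial>M)" by (rule integral_abs_bound)
    also have "\<dots> \<le> (\<integral>x. Gq q x \<partial>M)"
      using F_growth0[OF assms(1,2)] fi Gq_integrable[OF assms(2) M, unfolded Gq_def]
      by (intro integral_mono) (auto simp: Gq_def)
    finally show ?thesis .
  qed
  from one[OF assms(3)] one[OF assms(4)] show ?thesis by linarith
qed

lemma zero_in_F: "(\<lambda>x. 0) \<in> F_class q"
  unfolding F_class_def pseudo_lipschitz_def
  apply (rule CollectI)
  apply (rule exI[of _ "\<lambda>x. 0"], rule exI[of _ "\<lambda>x. 0"], rule exI[of _ "\<lambda>x. 0"])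
  using npow_nonneg by (auto simp: zero_blinfun.rep_eq)

lemma dF_bdd:
  assumes "q \<ge> 1" "Q \<in> P_class q" "P \<in> P_class q"
  shows "bdd_above ((\<lambda>f. \<bar>(\<integral>x. f x \<partial>Q) - (\<integral>y. f y \<partial>P)\<bar>) ` F_class q)"
  using F_diff_bound[OF _ assms(1,2,3)] by (intro bdd_aboveI2) auto

lemma diff_le_dF:
  assumes "f \<in> F_class q" "q \<ge> 1" "Q \<in> P_class q" "P \<in> P_class q"
  shows "\<bar>(\<integral>x. f x \<partial>Q) - (\<integral>x. f x \<partial>P)\<bar> \<le> d_F q Q P"
  unfolding d_F_def by (rule cSUP_upper[OF assms(1) dF_bdd[OF assms(2-4)]])

lemma dF_nonneg:
  assumes "q \<ge> 1" "Q \<in> P_class q" "P \<in> P_class q"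
  shows "0 \<le> d_F q Q P"
  using diff_le_dF[OF zero_in_F assms] by simp

lemma dF_le:
  assumes "\<And>f. f \<in> F_class q \<Longrightarrow> \<bar>(\<integral>x. f x \<partial>Q) - (\<integral>x. f x \<partial>P)\<bar> \<le> e"
  shows "d_F q Q P \<le> e"
  unfolding d_F_def using zero_in_F assms by (intro cSUP_least) auto

lemma conv_of_dF:
  assumes q: "q \<ge> 1" and P: "P \<in> P_class q" and Q: "\<And>n. Q n \<in> P_class q"
    and d: "(\<lambda>n. d_F q (Q n) P) \<longlonglongrightarrow> 0" and f: "f \<in> F_class q"
  shows "(\<lambda>n. \<integral>x. f x \<partial>Q n) \<longlonglongrightarrow> (\<integral>x. f x \<partial>P)"
proof -
  have "(\<lambda>n. (\<integral>x. f x \<partial>Q n) - (\<integral>x. f x \<partial>P)) \<longlonglongrightarrow> 0"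
    by (rule Lim_null_comparison[OF _ d]) (use diff_le_dF[OF f q Q P] in auto)
  then show ?thesis by (simp add: LIM_zero_iff)
qed

lemma ridge_conv:
  fixes t :: "'a::euclidean_space" and \<psi>0 \<psi>1 \<psi>2 \<psi>3 :: "real \<Rightarrow> real"
  assumes q: "q \<ge> 1" and P: "P \<in> P_class q" and Q: "\<And>n. Q n \<in> P_class q"
    and d: "(\<lambda>n. d_F q (Q n) P) \<longlonglongrightarrow> 0"
    and d0: "\<And>s. (\<psi>0 has_real_derivative \<psi>1 s) (at s)"
    and d1: "\<And>s. (\<psi>1 has_real_derivative \<psi>2 s) (at s)"
    and d2: "\<And>s. (\<psi>2 has_real_derivative \<psi>3 s) (at s)"
    and c3: "continuous_on UNIV \<psi>3"
    and B: "B \<ge> 0"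
    and g1: "\<And>s. \<bar>\<psi>1 s\<bar> \<le> B * (1 + npow \<bar>s\<bar> (q - 1))"
    and g2: "\<And>s. \<bar>\<psi>2 s\<bar> \<le> B * (1 + npow \<bar>s\<bar> (q - 1))"
    and g3: "\<And>s. \<bar>\<psi>3 s\<bar> \<le> B * (1 + npow \<bar>s\<bar> (q - 1))"
  shows "(\<lambda>n. \<integral>x. \<psi>0 (t \<bullet> x) \<partial>Q n) \<longlonglongrightarrow> (\<integral>x. \<psi>0 (t \<bullet> x) \<partial>P)"
proof -
  obtain c where c: "c > 0" "(\<lambda>x. c * \<psi>0 (t \<bullet> x)) \<in> F_class q"
    using ridge_F[OF q d0 d1 d2 c3 B g1 g2 g3] by blast
  have "(\<lambda>n. \<integral>x. c * \<psi>0 (t \<bullet> x) \<partial>Q n) \<longlonglongrightarrow> (\<integral>x. c * \<psi>0 (t \<bullet> x) \<partial>P)"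
    by (rule conv_of_dF[OF q P Q d c(2)])
  hence "(\<lambda>n. c * \<integral>x. \<psi>0 (t \<bullet> x) \<partial>Q n) \<longlonglongrightarrow> c * (\<integral>x. \<psi>0 (t \<bullet> x) \<partial>P)" by simp
  hence "(\<lambda>n. (1/c) * (c * \<integral>x. \<psi>0 (t \<bullet> x) \<partial>Q n)) \<longlonglongrightarrow> (1/c) * (c * (\<integral>x. \<psi>0 (t \<bullet> x) \<partial>P))"
    by (rule tendsto_mult_left)
  then show ?thesis using c(1) by simp
qed


definition phi :: "real \<Rightarrow> 'a::real_normed_vector \<Rightarrow> real" where
  "phi R x = max 0 (min 1 (R + 1 - norm x))"

lemma phi_cont: "continuous_on UNIV (phi R)"
  unfolding phi_def by (intro continuous_intros)

lemma phi_ge0: "0 \<le> phi R x" and phi_le1: "phi R x \<le> 1"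
  by (auto simp: phi_def)

lemma phi_one: "norm x \<le> R \<Longrightarrow> phi R x = 1"
  by (auto simp: phi_def)

lemma phi_zero: "norm x \<ge> R + 1 \<Longrightarrow> phi R x = 0"
  by (auto simp: phi_def)

lemma phi_mono: "R \<le> R' \<Longrightarrow> phi R x \<le> phi R' x"
  by (auto simp: phi_def)

lemma phi_lip: "\<bar>phi R x - phi R y\<bar> \<le> norm (x - y)"
proof -
  have "\<bar>norm x - norm y\<bar> \<le> norm (x - y)" by (rule norm_triangle_ineq3)
  then show ?thesis unfolding phi_def by (auto simp: max_def min_def)
qed

lemma phi_abs1: "\<bar>1 - phi R x\<bar> = 1 - phi R x" "1 - phi R x \<le> 1"
  using phi_ge0[of R x] phi_le1[of R x] by auto

lemma phi_lim: "(\<lambda>m. phi (real m) x) \<longlonglongrightarrow> 1"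
proof (rule tendsto_eventually)
  obtain N :: nat where "norm x \<le> real N" using real_arch_simple by blast
  then show "eventually (\<lambda>m. phi (real m) x = 1) sequentially"
    unfolding eventually_sequentially by (intro exI[of _ N]) (auto intro!: phi_one)
qed

lemma bounded_cutoff:
  fixes H :: "'a::euclidean_space \<Rightarrow> real"
  assumes "continuous_on UNIV H"
  shows "\<exists>B. \<forall>x. \<bar>H x * phi R x\<bar> \<le> B"
proof -
  have "compact (H ` cball 0 (R + 1))"
    by (rule compact_continuous_image) (use assms continuous_on_subset in auto)
  then obtain B where B: "\<And>y. y \<in> H ` cball 0 (R + 1) \<Longrightarrow> \<bar>y\<bar> \<le> B"
    using compact_imp_bounded bounded_real by meson
  have "\<bar>H x * phi R x\<bar> \<le> max B 0" for x
  proof (cases "norm x \<le> R + 1")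
    case True
    hence "\<bar>H x\<bar> \<le> B" using B by auto
    moreover have "\<bar>phi R x\<bar> \<le> 1" using phi_ge0[of R x] phi_le1[of R x] by simp
    ultimately have "\<bar>H x\<bar> * \<bar>phi R x\<bar> \<le> B * 1" by (intro mult_mono) auto
    then show ?thesis by (simp add: abs_mult)
  next
    case False then show ?thesis using phi_zero[of R x] by simp
  qed
  then show ?thesis by blast
qed

lemma weak_conv_bdd:
  fixes f :: "'a::topological_space \<Rightarrow> real"
  assumes "weak_conv Q P" "continuous_on UNIV f" "\<And>x. \<bar>f x\<bar> \<le> B"
  shows "(\<lambda>n. \<integral>x. f x \<partial>Q n) \<longlonglongrightarrow> (\<integral>x. f x \<partial>P)"
proof -
  have "bounded (range f)" by (rule boundedI[where B=B]) (use assms(3) in auto)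
  then show ?thesis using assms(1,2) unfolding weak_conv_def by blast
qed

lemma unif_tail:
  fixes T :: "nat \<Rightarrow> nat \<Rightarrow> real" and S :: "nat \<Rightarrow> real"
  assumes mono: "\<And>n m m'. m \<le> m' \<Longrightarrow> T n m' \<le> T n m"
    and lim_m: "\<And>n. (\<lambda>m. T n m) \<longlonglongrightarrow> 0"
    and lim_n: "\<And>m. (\<lambda>n. T n m) \<longlonglongrightarrow> S m"
    and S0: "S \<longlonglongrightarrow> 0" and e: "e > 0"
  shows "\<exists>m. (\<forall>n. T n m \<le> e) \<and> S m \<le> e"
proof -
  obtain m1 where m1: "\<And>m. m \<ge> m1 \<Longrightarrow> \<bar>S m\<bar> < e/2"
    using S0 e unfolding LIMSEQ_def dist_real_def by (metis diff_zero half_gt_zero)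
  obtain N where N: "\<And>n. n \<ge> N \<Longrightarrow> \<bar>T n m1 - S m1\<bar> < e/2"
    using lim_n[of m1] e unfolding LIMSEQ_def dist_real_def by (metis half_gt_zero)
  have "\<forall>n. \<exists>k. \<forall>m\<ge>k. \<bar>T n m\<bar> < e"
    using lim_m e unfolding LIMSEQ_def dist_real_def by (metis diff_zero)
  then obtain mn where mn: "\<And>n m. m \<ge> mn n \<Longrightarrow> \<bar>T n m\<bar> < e" by metis
  define m0 where "m0 = m1 + (\<Sum>n<N. mn n)"
  have "T n m0 \<le> e" for n
  proof (cases "n < N")
    case True
    have "mn n \<le> (\<Sum>n<N. mn n)" using True by (intro member_le_sum) auto
    hence "m0 \<ge> mn n" unfolding m0_def by simp
    then show ?thesis using mn[of n m0] by simp
  next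
    case False
    have a: "\<bar>T n m1 - S m1\<bar> < e/2" using N[of n] False by auto
    have b: "\<bar>S m1\<bar> < e/2" using m1[of m1] by auto
    have "T n m1 - S m1 \<le> \<bar>T n m1 - S m1\<bar>" "S m1 \<le> \<bar>S m1\<bar>" by (rule abs_ge_self)+
    hence "T n m1 < e" using a b by linarith
    moreover have "T n m0 \<le> T n m1" by (rule mono) (simp add: m0_def)
    ultimately show ?thesis by simp
  qed
  moreover have "S m0 \<le> e" using m1[of m0] by (simp add: m0_def)
  ultimately show ?thesis by blast
qed

lemma int_cut:
  fixes F :: "'a::euclidean_space \<Rightarrow> real"
  assumes M: "M \<in> P_class q" and FM: "integrable M F" and Fc: "continuous_on UNIV F"
  shows "integrable M (\<lambda>x. F x * (1 - phi R x))" "integrable M (\<lambda>x. F x * phi R x)"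
proof -
  have m1: "(\<lambda>x. F x * (1 - phi R x)) \<in> borel_measurable M"
    by (rule meas_cont[OF PC_sets[OF M]]) (intro continuous_intros Fc phi_cont)
  have m2: "(\<lambda>x. F x * phi R x) \<in> borel_measurable M"
    by (rule meas_cont[OF PC_sets[OF M]]) (intro continuous_intros Fc phi_cont)
  have b1: "norm (F x * (1 - phi R x)) \<le> norm (F x)" for x
    using phi_abs1[of R x] by (simp add: abs_mult mult_left_le)
  have b2: "norm (F x * phi R x) \<le> norm (F x)" for x
    using phi_ge0[of R x] phi_le1[of R x] by (simp add: abs_mult mult_left_le)
  show "integrable M (\<lambda>x. F x * (1 - phi R x))"
    by (rule Bochner_Integration.integrable_bound[OF FM m1]) (use b1 in auto)
  show "integrable M (\<lambda>x. F x * phi R x)"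
    by (rule Bochner_Integration.integrable_bound[OF FM m2]) (use b2 in auto)
qed

definition tail_ok :: "('a::euclidean_space \<Rightarrow> real) \<Rightarrow> (nat \<Rightarrow> 'a measure) \<Rightarrow> 'a measure \<Rightarrow> bool" where
  "tail_ok H Q P \<longleftrightarrow> (\<forall>e>0. \<exists>R. (\<forall>n. (\<integral>x. H x * (1 - phi R x) \<partial>Q n) \<le> e) \<and> (\<integral>x. H x * (1 - phi R x) \<partial>P) \<le> e)"

lemma dct_tail:
  fixes H :: "'a::euclidean_space \<Rightarrow> real"
  assumes M: "M \<in> P_class q" and Hc: "continuous_on UNIV H" and Hi: "integrable M H" and H0: "\<And>x. H x \<ge> 0"
  shows "(\<lambda>m. \<integral>x. H x * (1 - phi (real m) x) \<partial>M) \<longlonglongrightarrow> 0"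
proof -
  have meas: "(\<lambda>x. H x * (1 - phi (real m) x)) \<in> borel_measurable M" for m
    by (rule meas_cont[OF PC_sets[OF M]]) (intro continuous_intros Hc phi_cont)
  have "(\<lambda>m. \<integral>x. H x * (1 - phi (real m) x) \<partial>M) \<longlonglongrightarrow> (\<integral>x. 0 \<partial>M)"
  proof (rule integral_dominated_convergence[where w=H])
    show "AE x in M. (\<lambda>m. H x * (1 - phi (real m) x)) \<longlonglongrightarrow> 0"
      using tendsto_mult_left[OF tendsto_diff[OF tendsto_const phi_lim], of "H x" 1 for x] by auto
    show "AE x in M. norm (H x * (1 - phi (real m) x)) \<le> H x" for m
      using H0 phi_ge0[of "real m"] phi_le1[of "real m"]
      by (intro AE_I2) (auto simp: abs_mult phi_abs1 intro!: mult_left_le)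
  qed (use meas Hi in auto)
  then show ?thesis by simp
qed

lemma tail_from_conv:
  fixes H :: "'a::euclidean_space \<Rightarrow> real"
  assumes P: "P \<in> P_class q" and Q: "\<And>n. Q n \<in> P_class q" and wc: "weak_conv Q P"
    and Hc: "continuous_on UNIV H" and H0: "\<And>x. H x \<ge> 0"
    and HiQ: "\<And>n. integrable (Q n) H" and HiP: "integrable P H"
    and lim: "(\<lambda>n. \<integral>x. H x \<partial>Q n) \<longlonglongrightarrow> (\<integral>x. H x \<partial>P)"
  shows "tail_ok H Q P"
  unfolding tail_ok_def
proof (intro allI impI)
  fix e :: real assume e: "e > 0"
  have int: "integrable M (\<lambda>x. H x * (1 - phi R x))" and int2: "integrable M (\<lambda>x. H x * phi R x)"
    if M: "M \<in> P_class q" and HM: "integrable M H" for M and R :: real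
    using int_cut[OF M HM Hc] by auto
  define T where "T n m = (\<integral>x. H x * (1 - phi (real m) x) \<partial>Q n)" for n m
  define S where "S m = (\<integral>x. H x * (1 - phi (real m) x) \<partial>P)" for m
  have "\<exists>m. (\<forall>n. T n m \<le> e) \<and> S m \<le> e"
  proof (rule unif_tail[OF _ _ _ _ e])
    show "T n m' \<le> T n m" if "m \<le> m'" for n m m'
      unfolding T_def
      by (rule integral_mono[OF int[OF Q HiQ] int[OF Q HiQ]])
         (use that H0 phi_mono[of "real m" "real m'"] in \<open>auto intro!: mult_left_mono\<close>)
    show "(\<lambda>m. T n m) \<longlonglongrightarrow> 0" for n unfolding T_def by (rule dct_tail[OF Q Hc HiQ H0])
    show "S \<longlonglongrightarrow> 0" unfolding S_def by (rule dct_tail[OF P Hc HiP H0])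
    show "(\<lambda>n. T n m) \<longlonglongrightarrow> S m" for m
    proof -
      obtain B where B: "\<And>x. \<bar>H x * phi (real m) x\<bar> \<le> B" using bounded_cutoff[OF Hc] by blast
      have c: "(\<lambda>n. \<integral>x. H x * phi (real m) x \<partial>Q n) \<longlonglongrightarrow> (\<integral>x. H x * phi (real m) x \<partial>P)"
        by (rule weak_conv_bdd[OF wc _ B]) (intro continuous_intros Hc phi_cont)
      have eq: "(\<integral>x. H x * (1 - phi (real m) x) \<partial>M) = (\<integral>x. H x \<partial>M) - (\<integral>x. H x * phi (real m) x \<partial>M)"
        if M: "M \<in> P_class q" and HM: "integrable M H" for M
        using HM int2[OF M HM] by (simp add: right_diff_distrib)
      show ?thesis unfolding T_def S_def
        using tendsto_diff[OF lim c] by (simp add: eq[OF Q HiQ] eq[OF P HiP])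
    qed
  qed
  then obtain m where "\<forall>n. T n m \<le> e" "S m \<le> e" by blast
  then show "\<exists>R. (\<forall>n. (\<integral>x. H x * (1 - phi R x) \<partial>Q n) \<le> e) \<and> (\<integral>x. H x * (1 - phi R x) \<partial>P) \<le> e"
    unfolding T_def S_def by blast
qed

lemma conv_growth:
  fixes H F :: "'a::euclidean_space \<Rightarrow> real"
  assumes P: "P \<in> P_class q" and Q: "\<And>n. Q n \<in> P_class q" and wc: "weak_conv Q P"
    and Hc: "continuous_on UNIV H" and H0: "\<And>x. H x \<ge> 0"
    and HiQ: "\<And>n. integrable (Q n) H" and HiP: "integrable P H"
    and tail: "tail_ok H Q P"
    and Fc: "continuous_on UNIV F" and FH: "\<And>x. \<bar>F x\<bar> \<le> C * H x" and C0: "C \<ge> 0"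
  shows "(\<lambda>n. \<integral>x. F x \<partial>Q n) \<longlonglongrightarrow> (\<integral>x. F x \<partial>P)"
proof (rule LIMSEQ_I)
  fix r :: real assume r: "r > 0"
  define e where "e = r / (3 * (C + 1))"
  have e: "e > 0" using r C0 by (simp add: e_def)
  obtain R where RQ: "\<And>n. (\<integral>x. H x * (1 - phi R x) \<partial>Q n) \<le> e" and RP: "(\<integral>x. H x * (1 - phi R x) \<partial>P) \<le> e"
    using tail e unfolding tail_ok_def by blast
  have close: "\<bar>(\<integral>x. F x \<partial>M) - (\<integral>x. F x * phi R x \<partial>M)\<bar> \<le> C * e"
    if M: "M \<in> P_class q" and HM: "integrable M H" and Rt: "(\<integral>x. H x * (1 - phi R x) \<partial>M) \<le> e" for M
  proof -
    have FM: "integrable M F"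
      by (rule Bochner_Integration.integrable_bound[of _ "\<lambda>x. C * H x"])
         (use HM meas_cont[OF PC_sets[OF M] Fc] FH in \<open>auto intro: order_trans[OF _ abs_ge_self]\<close>)
    have F2: "integrable M (\<lambda>x. F x * phi R x)" by (rule int_cut[OF M FM Fc])
    have H2: "integrable M (\<lambda>x. C * (H x * (1 - phi R x)))"
      by (intro integrable_mult_right int_cut[OF M HM Hc])
    have "(\<integral>x. F x \<partial>M) - (\<integral>x. F x * phi R x \<partial>M) = (\<integral>x. F x * (1 - phi R x) \<partial>M)"
      using FM F2 by (simp add: right_diff_distrib)
    also have "\<bar>\<dots>\<bar> \<le> (\<integral>x. \<bar>F x * (1 - phi R x)\<bar> \<partial>M)" by (rule integral_abs_bound)
    also have "\<dots> \<le> (\<integral>x. C * (H x * (1 - phi R x)) \<partial>M)"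
    proof (rule integral_mono[OF _ H2])
      show "integrable M (\<lambda>x. \<bar>F x * (1 - phi R x)\<bar>)"
        using FM F2 by (intro integrable_abs) (simp add: right_diff_distrib)
      fix x
      have "\<bar>F x * (1 - phi R x)\<bar> = \<bar>F x\<bar> * (1 - phi R x)" using phi_le1[of R x] by (simp add: abs_mult)
      also have "\<dots> \<le> C * H x * (1 - phi R x)" using FH[of x] phi_le1[of R x] by (intro mult_right_mono) auto
      finally show "\<bar>F x * (1 - phi R x)\<bar> \<le> C * (H x * (1 - phi R x))" by simp
    qed
    also have "\<dots> = C * (\<integral>x. H x * (1 - phi R x) \<partial>M)" by simp
    also have "\<dots> \<le> C * e" using Rt C0 by (intro mult_left_mono) auto
    finally show ?thesis .
  qed
  obtain B where B: "\<And>x. \<bar>F x * phi R x\<bar> \<le> B" using bounded_cutoff[OF Fc] by blast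
  have c: "(\<lambda>n. \<integral>x. F x * phi R x \<partial>Q n) \<longlonglongrightarrow> (\<integral>x. F x * phi R x \<partial>P)"
    by (rule weak_conv_bdd[OF wc _ B]) (intro continuous_intros Fc phi_cont)
  have "r / 3 > 0" using r by simp
  then obtain N where N: "\<And>n. n \<ge> N \<Longrightarrow> \<bar>(\<integral>x. F x * phi R x \<partial>Q n) - (\<integral>x. F x * phi R x \<partial>P)\<bar> < r / 3"
    using c unfolding LIMSEQ_def dist_real_def by blast
  have Ce: "C * e < r / 3"
  proof -
    have "C * e = r / 3 * (C / (C + 1))" using C0 by (simp add: e_def field_simps)
    also have "\<dots> < r / 3 * 1" using r C0 by (intro mult_strict_left_mono) auto
    finally show ?thesis by simp
  qed
  show "\<exists>N. \<forall>n\<ge>N. norm ((\<integral>x. F x \<partial>Q n) - (\<integral>x. F x \<partial>P)) < r"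
  proof (intro exI allI impI)
    fix n assume "n \<ge> N"
    have a: "\<bar>(\<integral>x. F x * phi R x \<partial>Q n) - (\<integral>x. F x * phi R x \<partial>P)\<bar> < r / 3" by (rule N[OF \<open>n \<ge> N\<close>])
    have b: "\<bar>(\<integral>x. F x \<partial>Q n) - (\<integral>x. F x * phi R x \<partial>Q n)\<bar> \<le> C * e" by (rule close[OF Q HiQ RQ])
    have c: "\<bar>(\<integral>x. F x \<partial>P) - (\<integral>x. F x * phi R x \<partial>P)\<bar> \<le> C * e" by (rule close[OF P HiP RP])
    show "norm ((\<integral>x. F x \<partial>Q n) - (\<integral>x. F x \<partial>P)) < r"
      unfolding real_norm_def using a b c Ce by linarith
  qed
qed


lemma tail_mono:
  fixes H :: "'a::euclidean_space \<Rightarrow> real"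
  assumes M: "M \<in> P_class q" and HM: "integrable M H" and Hc: "continuous_on UNIV H" and H0: "\<And>x. H x \<ge> 0"
    and RR: "R \<le> R'"
  shows "(\<integral>x. H x * (1 - phi R' x) \<partial>M) \<le> (\<integral>x. H x * (1 - phi R x) \<partial>M)"
  by (rule integral_mono[OF int_cut(1)[OF M HM Hc] int_cut(1)[OF M HM Hc]])
     (use H0 phi_mono[OF RR] in \<open>auto intro!: mult_left_mono\<close>)

lemma floor_close:
  fixes a b e :: real
  assumes "e > 0" "\<lfloor>a / e\<rfloor> = \<lfloor>b / e\<rfloor>"
  shows "\<bar>a - b\<bar> < e"
proof -
  define z where "z = real_of_int \<lfloor>a / e\<rfloor>"
  have f1: "z \<le> a / e" "a / e < z + 1" unfolding z_def by (rule of_int_floor_le, rule real_of_int_floor_add_one_gt)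
  have f2: "z \<le> b / e" "b / e < z + 1" unfolding z_def assms(2) by (rule of_int_floor_le, rule real_of_int_floor_add_one_gt)
  have "a / e - b / e < 1" "b / e - a / e < 1" using f1 f2 by linarith+
  hence "\<bar>a / e - b / e\<bar> < 1" by (simp add: abs_less_iff)
  hence "\<bar>(a - b) / e\<bar> < 1" by (simp add: diff_divide_distrib)
  hence "\<bar>a - b\<bar> / e < 1" using assms(1) by simp
  then show ?thesis using assms(1) by (simp add: divide_less_eq)
qed

lemma F_lip_ball:
  assumes f: "f \<in> F_class q" and q: "q \<ge> 1" and x: "norm x \<le> \<rho>" and y: "norm y \<le> \<rho>"
  shows "\<bar>f x - f y\<bar> \<le> (1 + 2 * npow \<rho> (q - 1)) * norm (x - y)"
proof -
  have "\<bar>f x - f y\<bar> \<le> (1 + npow (norm x) (q - 1) + npow (norm y) (q - 1)) * norm (x - y)"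
    by (rule F_props(2)[OF f])
  also have "\<dots> \<le> (1 + 2 * npow \<rho> (q - 1)) * norm (x - y)"
    using npow_mono[of "norm x" \<rho> "q - 1"] npow_mono[of "norm y" \<rho> "q - 1"] x y q
    by (intro mult_right_mono) auto
  finally show ?thesis .
qed

lemma F_bnd_ball:
  assumes f: "f \<in> F_class q" and q: "q \<ge> 1" and x: "norm x \<le> \<rho>"
  shows "\<bar>f x - f 0\<bar> \<le> 2 * \<rho> + \<rho> powr q"
proof -
  have "norm x powr q \<le> \<rho> powr q" using x q by (intro powr_mono2) auto
  then show ?thesis using F_growth0[OF f q, of x] x by linarith
qed

lemma tail_pow_bound:
  assumes q: "q \<ge> 1" and R: "R \<ge> 1"
  shows "(2 * norm x + norm x powr q) * (1 - phi R x) \<le> 3 * (norm x powr q * (1 - phi R x))"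
proof (cases "norm x \<le> R")
  case True then show ?thesis by (simp add: phi_one)
next
  case False
  hence "norm x \<ge> 1" using R by simp
  hence "norm x powr 1 \<le> norm x powr q" using q by (intro powr_mono) auto
  hence "2 * norm x + norm x powr q \<le> 3 * norm x powr q" by simp
  hence "(2 * norm x + norm x powr q) * (1 - phi R x) \<le> (3 * norm x powr q) * (1 - phi R x)"
    using phi_le1[of R x] by (intro mult_right_mono) auto
  then show ?thesis by simp
qed

lemma unif_F:
  fixes Q :: "nat \<Rightarrow> 'a::euclidean_space measure"
  assumes q: "q \<ge> 1" and P: "P \<in> P_class q" and Q: "\<And>n. Q n \<in> P_class q"
    and wc: "weak_conv Q P" and tail: "tail_ok (\<lambda>x. norm x powr q) Q P" and e: "e > 0"
  shows "\<exists>N. \<forall>n\<ge>N. \<forall>f\<in>F_class q. \<bar>(\<integral>x. f x \<partial>Q n) - (\<integral>x. f x \<partial>P)\<bar> \<le> 13 * e"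
proof -
  let ?H = "\<lambda>x::'a. norm x powr q"
  have Hc: "continuous_on UNIV ?H" by (rule cont_norm_powr) (use q in simp)
  have H0: "\<And>x. ?H x \<ge> 0" by simp
  obtain R0 where R0Q: "\<And>n. (\<integral>x. ?H x * (1 - phi R0 x) \<partial>Q n) \<le> e"
      and R0P: "(\<integral>x. ?H x * (1 - phi R0 x) \<partial>P) \<le> e"
    using tail e unfolding tail_ok_def by blast
  define R where "R = max R0 1"
  have R1: "R \<ge> 1" by (simp add: R_def)
  have RQ: "(\<integral>x. ?H x * (1 - phi R x) \<partial>Q n) \<le> e" for n
  proof -
    have "(\<integral>x. ?H x * (1 - phi R x) \<partial>Q n) \<le> (\<integral>x. ?H x * (1 - phi R0 x) \<partial>Q n)"
      by (rule tail_mono[OF Q PC_int[OF Q] Hc H0]) (simp add: R_def)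
    thus ?thesis using R0Q[of n] by linarith
  qed
  have RP: "(\<integral>x. ?H x * (1 - phi R x) \<partial>P) \<le> e"
  proof -
    have "(\<integral>x. ?H x * (1 - phi R x) \<partial>P) \<le> (\<integral>x. ?H x * (1 - phi R0 x) \<partial>P)"
      by (rule tail_mono[OF P PC_int[OF P] Hc H0]) (simp add: R_def)
    thus ?thesis using R0P by linarith
  qed
  define \<rho> where "\<rho> = R + 1"
  have \<rho>0: "\<rho> \<ge> 0" using R1 by (simp add: \<rho>_def)
  define L where "L = 1 + 2 * npow \<rho> (q - 1)"
  define Mb where "Mb = 2 * \<rho> + \<rho> powr q"
  have L0: "L \<ge> 0" using npow_nonneg by (simp add: L_def add_nonneg_nonneg)
  have Mb0: "Mb \<ge> 0" using \<rho>0 by (simp add: Mb_def)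
  define g where "g f x = (f x - f 0) * phi R x" for f :: "'a \<Rightarrow> real" and x
  have g_out: "g f x = 0" if "norm x > \<rho>" for f x
    using that phi_zero[of R x] by (simp add: g_def \<rho>_def)
  have g_bnd: "\<bar>g f x\<bar> \<le> Mb" if "f \<in> F_class q" for f x
  proof (cases "norm x \<le> \<rho>")
    case True
    have "\<bar>g f x\<bar> = \<bar>f x - f 0\<bar> * phi R x" using phi_ge0[of R x] by (simp add: g_def abs_mult)
    also have "\<dots> \<le> Mb * 1"
      using F_bnd_ball[OF that q True] phi_ge0[of R x] phi_le1[of R x] Mb0
      by (intro mult_mono) (auto simp: Mb_def)
    finally show ?thesis by simp
  next
    case False then show ?thesis using g_out Mb0 by simp
  qed
  have g_lip: "\<bar>g f x - g f y\<bar> \<le> (L + Mb) * norm (x - y)"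
    if f: "f \<in> F_class q" and x: "norm x \<le> \<rho>" and y: "norm y \<le> \<rho>" for f x y
  proof -
    have "g f x - g f y = (f x - f y) * phi R x + (f y - f 0) * (phi R x - phi R y)"
      by (simp add: g_def algebra_simps)
    also have "\<bar>\<dots>\<bar> \<le> \<bar>f x - f y\<bar> * phi R x + \<bar>f y - f 0\<bar> * \<bar>phi R x - phi R y\<bar>"
    proof -
      have "\<bar>(f x - f y) * phi R x + (f y - f 0) * (phi R x - phi R y)\<bar> \<le> \<bar>(f x - f y) * phi R x\<bar> + \<bar>(f y - f 0) * (phi R x - phi R y)\<bar>"
        by (rule abs_triangle_ineq)
      also have "\<dots> = \<bar>f x - f y\<bar> * phi R x + \<bar>f y - f 0\<bar> * \<bar>phi R x - phi R y\<bar>"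
        using phi_ge0[of R x] by (simp add: abs_mult)
      finally show ?thesis .
    qed
    also have "\<dots> \<le> (L * norm (x - y)) * 1 + Mb * norm (x - y)"
    proof (intro add_mono mult_mono)
      show "\<bar>f x - f y\<bar> \<le> L * norm (x - y)" unfolding L_def by (rule F_lip_ball[OF f q x y])
      show "\<bar>f y - f 0\<bar> \<le> Mb" unfolding Mb_def by (rule F_bnd_ball[OF f q y])
      show "\<bar>phi R x - phi R y\<bar> \<le> norm (x - y)" by (rule phi_lip)
    qed (use phi_le1 phi_ge0 Mb0 L0 in auto)
    finally show ?thesis by (simp add: algebra_simps)
  qed
  define \<delta> where "\<delta> = e / (L + Mb + 1)"
  have \<delta>0: "\<delta> > 0" using e L0 Mb0 by (simp add: \<delta>_def)
  have \<delta>b: "(L + Mb) * \<delta> \<le> e"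
  proof -
    have "(L + Mb) * \<delta> = e * ((L + Mb) / (L + Mb + 1))" using L0 Mb0 by (simp add: \<delta>_def field_simps)
    also have "\<dots> \<le> e * 1" using e L0 Mb0 by (intro mult_left_mono) auto
    finally show ?thesis by simp
  qed
  have "compact (cball (0::'a) \<rho>)" by simp
  hence tb: "\<forall>\<epsilon>>0. \<exists>k. finite k \<and> k \<subseteq> cball (0::'a) \<rho> \<and> cball 0 \<rho> \<subseteq> (\<Union>x\<in>k. ball x \<epsilon>)"
    by (intro seq_compact_imp_totally_bounded compact_imp_seq_compact)
  note tb[rule_format, OF \<delta>0]
  then obtain NN where NN0: "finite NN \<and> NN \<subseteq> cball (0::'a) \<rho> \<and> cball 0 \<rho> \<subseteq> (\<Union>p\<in>NN. ball p \<delta>)" ..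
  have NN: "finite NN" "NN \<subseteq> cball (0::'a) \<rho>" "cball 0 \<rho> \<subseteq> (\<Union>p\<in>NN. ball p \<delta>)"
    using NN0 by simp_all
  define v where "v f = restrict (\<lambda>p. \<lfloor>g f p / e\<rfloor>) NN" for f
  define k where "k = \<lceil>Mb / e\<rceil> + 1"
  have v_in: "v f \<in> (\<Pi>\<^sub>E p\<in>NN. {-k..k})" if "f \<in> F_class q" for f
  proof -
    have "\<lfloor>g f p / e\<rfloor> \<in> {-k..k}" for p
    proof -
      have gb: "- Mb \<le> g f p" "g f p \<le> Mb" using g_bnd[OF that, of p] by (auto simp: abs_le_iff)
      have lo: "- (Mb / e) \<le> g f p / e" using divide_right_mono[OF gb(1), of e] e by simp
      have hi: "g f p / e \<le> Mb / e" using divide_right_mono[OF gb(2), of e] e by simp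
      have i1: "\<lfloor>- (Mb / e)\<rfloor> \<le> \<lfloor>g f p / e\<rfloor>" by (rule floor_mono[OF lo])
      have i2: "\<lfloor>- (Mb / e)\<rfloor> = - \<lceil>Mb / e\<rceil>" by (simp add: ceiling_def)
      have i3: "\<lfloor>g f p / e\<rfloor> \<le> \<lfloor>Mb / e\<rfloor>" by (rule floor_mono[OF hi])
      have i4: "\<lfloor>Mb / e\<rfloor> \<le> \<lceil>Mb / e\<rceil>" by (rule floor_le_ceiling)
      show ?thesis unfolding k_def atLeastAtMost_iff using i1 i2 i3 i4 by linarith
    qed
    then show ?thesis unfolding v_def by (simp add: PiE_iff)
  qed
  define V where "V = v ` F_class q"
  have finV: "finite V"
    by (rule finite_subset[of _ "\<Pi>\<^sub>E p\<in>NN. {-k..k}"]) (use v_in NN(1) in \<open>auto simp: V_def intro!: finite_PiE\<close>)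
  define rep where "rep w = (SOME f. f \<in> F_class q \<and> v f = w)" for w
  have rep: "rep (v f) \<in> F_class q \<and> v (rep (v f)) = v f" if "f \<in> F_class q" for f
    unfolding rep_def by (rule someI[of "\<lambda>f'. f' \<in> F_class q \<and> v f' = v f" f]) (use that in simp)
  have close: "\<bar>g f x - g f' x\<bar> \<le> 3 * e"
    if f: "f \<in> F_class q" and f': "f' \<in> F_class q" and vv: "v f = v f'" for f f' x
  proof (cases "norm x \<le> \<rho>")
    case False
    hence "g f x = 0" "g f' x = 0" using g_out by auto
    then show ?thesis using e by simp
  next
    case True
    hence xin: "x \<in> cball (0::'a) \<rho>" by simp
    have "x \<in> (\<Union>p\<in>NN. ball p \<delta>)" by (rule subsetD[OF NN(3) xin])
    then obtain p where p: "p \<in> NN" "x \<in> ball p \<delta>" by (rule UN_E)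
    have "p \<in> cball (0::'a) \<rho>" by (rule subsetD[OF NN(2) p(1)])
    hence pn: "norm p \<le> \<rho>" by simp
    have dx: "norm (x - p) \<le> \<delta>" using p(2) by (simp add: dist_norm norm_minus_commute)
    have "v f p = v f' p" using vv by simp
    hence "\<lfloor>g f p / e\<rfloor> = \<lfloor>g f' p / e\<rfloor>" using p(1) by (simp add: v_def)
    hence c: "\<bar>g f p - g f' p\<bar> < e" by (rule floor_close[OF e])
    have LMd: "(L + Mb) * norm (x - p) \<le> e"
      using mult_left_mono[OF dx, of "L + Mb"] L0 Mb0 \<delta>b by simp
    have a: "\<bar>g f x - g f p\<bar> \<le> e" using g_lip[OF f True pn] LMd by simp
    have b: "\<bar>g f' x - g f' p\<bar> \<le> e" using g_lip[OF f' True pn] LMd by simp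
    show ?thesis using a b c by linarith
  qed
  have g_cont: "continuous_on UNIV (g f)" if "f \<in> F_class q" for f
    unfolding g_def by (intro continuous_intros F_props(1)[OF that] phi_cont)
  have ev: "eventually (\<lambda>n. \<forall>w\<in>V. \<bar>(\<integral>x. g (rep w) x \<partial>Q n) - (\<integral>x. g (rep w) x \<partial>P)\<bar> < e) sequentially"
  proof (rule eventually_ball_finite[OF finV], intro ballI)
    fix w assume "w \<in> V"
    then obtain f where f: "f \<in> F_class q" "w = v f" by (auto simp: V_def)
    have rf: "rep w \<in> F_class q" using rep[OF f(1)] f(2) by simp
    have "(\<lambda>n. \<integral>x. g (rep w) x \<partial>Q n) \<longlonglongrightarrow> (\<integral>x. g (rep w) x \<partial>P)"
      by (rule weak_conv_bdd[OF wc g_cont[OF rf] g_bnd[OF rf]])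
    then show "eventually (\<lambda>n. \<bar>(\<integral>x. g (rep w) x \<partial>Q n) - (\<integral>x. g (rep w) x \<partial>P)\<bar> < e) sequentially"
      using e unfolding tendsto_iff dist_real_def by blast
  qed
  then obtain N where N: "\<And>n. n \<ge> N \<Longrightarrow> \<forall>w\<in>V. \<bar>(\<integral>x. g (rep w) x \<partial>Q n) - (\<integral>x. g (rep w) x \<partial>P)\<bar> < e"
    unfolding eventually_sequentially by blast
  have decomp: "\<bar>(\<integral>x. f x \<partial>M) - f 0 - (\<integral>x. g f' x \<partial>M)\<bar> \<le> 6 * e"
    if M: "M \<in> P_class q" and f: "f \<in> F_class q" and f': "f' \<in> F_class q" and vv: "v f = v f'"
      and Mt: "(\<integral>x. ?H x * (1 - phi R x) \<partial>M) \<le> e" for M f f'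
  proof -
    interpret prob_space M using PC_prob[OF M] .
    have fi: "integrable M f" by (rule F_integrable[OF f q M])
    have f0i: "integrable M (\<lambda>x. f x - f 0)" using fi by simp
    have fc: "continuous_on UNIV (\<lambda>x. f x - f 0)" by (intro continuous_intros F_props(1)[OF f])
    have gi: "integrable M (g f)" unfolding g_def by (rule int_cut(2)[OF M f0i fc])
    have g'i: "integrable M (g f')" unfolding g_def
      by (rule int_cut(2)[OF M _ _]) (use F_integrable[OF f' q M] F_props(1)[OF f'] in \<open>auto intro!: continuous_intros\<close>)
    have ti: "integrable M (\<lambda>x. (f x - f 0) * (1 - phi R x))" by (rule int_cut(1)[OF M f0i fc])
    have Hti: "integrable M (\<lambda>x. ?H x * (1 - phi R x))" by (rule int_cut(1)[OF M PC_int[OF M] Hc])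
    have eq: "(\<integral>x. f x \<partial>M) - f 0 = (\<integral>x. g f x \<partial>M) + (\<integral>x. (f x - f 0) * (1 - phi R x) \<partial>M)"
    proof -
      have "(\<integral>x. f x \<partial>M) - f 0 = (\<integral>x. f x - f 0 \<partial>M)" using fi by (simp add: prob_space)
      also have "\<dots> = (\<integral>x. g f x + (f x - f 0) * (1 - phi R x) \<partial>M)"
        by (rule Bochner_Integration.integral_cong) (auto simp: g_def algebra_simps)
      also have "\<dots> = (\<integral>x. g f x \<partial>M) + (\<integral>x. (f x - f 0) * (1 - phi R x) \<partial>M)"
        using gi ti by simp
      finally show ?thesis .
    qed
    have t: "\<bar>\<integral>x. (f x - f 0) * (1 - phi R x) \<partial>M\<bar> \<le> 3 * e"
    proof -
      have "\<bar>\<integral>x. (f x - f 0) * (1 - phi R x) \<partial>M\<bar> \<le> (\<integral>x. \<bar>(f x - f 0) * (1 - phi R x)\<bar> \<partial>M)"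
        by (rule integral_abs_bound)
      also have "\<dots> \<le> (\<integral>x. 3 * (?H x * (1 - phi R x)) \<partial>M)"
      proof (rule integral_mono)
        show "integrable M (\<lambda>x. \<bar>(f x - f 0) * (1 - phi R x)\<bar>)" using ti by simp
        show "integrable M (\<lambda>x. 3 * (?H x * (1 - phi R x)))" using Hti by simp
        fix x
        have "\<bar>(f x - f 0) * (1 - phi R x)\<bar> = \<bar>f x - f 0\<bar> * (1 - phi R x)" by (simp add: abs_mult phi_abs1)
        also have "\<dots> \<le> (2 * norm x + norm x powr q) * (1 - phi R x)"
          using F_growth0[OF f q, of x] phi_abs1(2)[of R x] phi_le1[of R x] by (intro mult_right_mono) auto
        also have "\<dots> \<le> 3 * (?H x * (1 - phi R x))" by (rule tail_pow_bound[OF q R1])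
        finally show "\<bar>(f x - f 0) * (1 - phi R x)\<bar> \<le> 3 * (?H x * (1 - phi R x))" .
      qed
      also have "\<dots> = 3 * (\<integral>x. ?H x * (1 - phi R x) \<partial>M)" by simp
      also have "\<dots> \<le> 3 * e" using Mt by simp
      finally show ?thesis .
    qed
    have gg: "\<bar>(\<integral>x. g f x \<partial>M) - (\<integral>x. g f' x \<partial>M)\<bar> \<le> 3 * e"
    proof -
      have "(\<integral>x. g f x \<partial>M) - (\<integral>x. g f' x \<partial>M) = (\<integral>x. g f x - g f' x \<partial>M)" using gi g'i by simp
      also have "\<bar>\<dots>\<bar> \<le> (\<integral>x. \<bar>g f x - g f' x\<bar> \<partial>M)" by (rule integral_abs_bound)
      also have "\<dots> \<le> (\<integral>x. 3 * e \<partial>M)"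
        by (rule integral_mono) (use gi g'i close[OF f f' vv] in auto)
      also have "\<dots> = 3 * e" by (simp add: prob_space)
      finally show ?thesis .
    qed
    show ?thesis using eq t gg by linarith
  qed
  show ?thesis
  proof (intro exI allI impI ballI)
    fix n and f :: "'a \<Rightarrow> real" assume n: "n \<ge> N" and f: "f \<in> F_class q"
    define f' where "f' = rep (v f)"
    have f': "f' \<in> F_class q" "v f = v f'" using rep[OF f] by (auto simp: f'_def)
    have w: "v f \<in> V" using f by (simp add: V_def)
    have a: "\<bar>(\<integral>x. g f' x \<partial>Q n) - (\<integral>x. g f' x \<partial>P)\<bar> < e" using N[OF n] w by (simp add: f'_def)
    have b: "\<bar>(\<integral>x. f x \<partial>Q n) - f 0 - (\<integral>x. g f' x \<partial>Q n)\<bar> \<le> 6 * e"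
      by (rule decomp[OF Q f f'(1) f'(2) RQ])
    have c: "\<bar>(\<integral>x. f x \<partial>P) - f 0 - (\<integral>x. g f' x \<partial>P)\<bar> \<le> 6 * e"
      by (rule decomp[OF P f f'(1) f'(2) RP])
    show "\<bar>(\<integral>x. f x \<partial>Q n) - (\<integral>x. f x \<partial>P)\<bar> \<le> 13 * e" using a b c by linarith
  qed
qed

lemma dir_b_a:
  fixes Q :: "nat \<Rightarrow> 'a::euclidean_space measure"
  assumes q: "q \<ge> 1" and P: "P \<in> P_class q" and Q: "\<And>n. Q n \<in> P_class q"
    and wc: "weak_conv Q P"
    and mom: "(\<lambda>n. \<integral>x. norm x powr q \<partial>Q n) \<longlonglongrightarrow> (\<integral>x. norm x powr q \<partial>P)"
  shows "(\<lambda>n. d_F q (Q n) P) \<longlonglongrightarrow> 0"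
proof -
  have tail: "tail_ok (\<lambda>x. norm x powr q) Q P"
    by (rule tail_from_conv[OF P Q wc _ _ PC_int[OF Q] PC_int[OF P] mom])
       (use cont_norm_powr[of q] q in auto)
  show ?thesis
  proof (rule LIMSEQ_I)
    fix r :: real assume r: "r > 0"
    obtain N where N: "\<And>n f. n \<ge> N \<Longrightarrow> f \<in> F_class q \<Longrightarrow> \<bar>(\<integral>x. f x \<partial>Q n) - (\<integral>x. f x \<partial>P)\<bar> \<le> 13 * (r / 26)"
      using unif_F[OF q P Q wc tail, of "r / 26"] r by auto
    show "\<exists>N. \<forall>n\<ge>N. norm (d_F q (Q n) P - 0) < r"
    proof (intro exI allI impI)
      fix n assume n: "n \<ge> N"
      have "d_F q (Q n) P \<le> 13 * (r / 26)" by (rule dF_le) (rule N[OF n])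
      moreover have "0 \<le> d_F q (Q n) P" by (rule dF_nonneg[OF q Q P])
      ultimately show "norm (d_F q (Q n) P - 0) < r" using r by simp
    qed
  qed
qed


inductive_set TR :: "('a::euclidean_space \<Rightarrow> real) set" where
  cosI: "(\<lambda>x. cos (t \<bullet> x)) \<in> TR"
| sinI: "(\<lambda>x. sin (t \<bullet> x)) \<in> TR"
| addI: "f \<in> TR \<Longrightarrow> g \<in> TR \<Longrightarrow> (\<lambda>x. f x + g x) \<in> TR"
| smultI: "f \<in> TR \<Longrightarrow> (\<lambda>x. c * f x) \<in> TR"

lemma TR_const: "(\<lambda>x. c) \<in> TR"
proof -
  have "(\<lambda>x::'a. c * cos (0 \<bullet> x)) \<in> TR" by (intro TR.smultI TR.cosI)
  then show ?thesis by simp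
qed

lemma TR_sum: "finite A \<Longrightarrow> (\<And>i. i \<in> A \<Longrightarrow> f i \<in> TR) \<Longrightarrow> (\<lambda>x. \<Sum>i\<in>A. f i x) \<in> TR"
proof (induction A rule: finite_induct)
  case empty then show ?case using TR_const[of 0] by simp
next
  case (insert a A)
  have "(\<lambda>x. f a x + (\<Sum>i\<in>A. f i x)) \<in> TR" using insert by (intro TR.addI) auto
  then show ?case using insert by simp
qed

lemma TR_gen_mult:
  assumes h: "h = (\<lambda>x. cos (s \<bullet> x)) \<or> h = (\<lambda>x. sin (s \<bullet> x))" and f: "f \<in> TR"
  shows "(\<lambda>x. h x * f x) \<in> TR"
  using f
proof induction
  case (cosI t)
  have c1: "(\<lambda>x. (1/2) * cos ((s + t) \<bullet> x) + (1/2) * cos ((s - t) \<bullet> x)) \<in> TR"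
    by (intro TR.intros)
  have c2: "(\<lambda>x. (1/2) * sin ((s + t) \<bullet> x) + (1/2) * sin ((s - t) \<bullet> x)) \<in> TR"
    by (intro TR.intros)
  from h show ?case
  proof
    assume "h = (\<lambda>x. cos (s \<bullet> x))"
    moreover have "(\<lambda>x. cos (s \<bullet> x) * cos (t \<bullet> x)) = (\<lambda>x. (1/2) * cos ((s + t) \<bullet> x) + (1/2) * cos ((s - t) \<bullet> x))"
      by (auto simp: inner_add_left inner_diff_left cos_add cos_diff algebra_simps)
    ultimately show ?thesis using c1 by simp
  next
    assume "h = (\<lambda>x. sin (s \<bullet> x))"
    moreover have "(\<lambda>x. sin (s \<bullet> x) * cos (t \<bullet> x)) = (\<lambda>x. (1/2) * sin ((s + t) \<bullet> x) + (1/2) * sin ((s - t) \<bullet> x))"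
      by (auto simp: inner_add_left inner_diff_left sin_add sin_diff algebra_simps)
    ultimately show ?thesis using c2 by simp
  qed
next
  case (sinI t)
  have c1: "(\<lambda>x. (-1/2) * cos ((s + t) \<bullet> x) + (1/2) * cos ((s - t) \<bullet> x)) \<in> TR"
    by (intro TR.intros)
  have c2: "(\<lambda>x. (1/2) * sin ((s + t) \<bullet> x) + (-1/2) * sin ((s - t) \<bullet> x)) \<in> TR"
    by (intro TR.intros)
  from h show ?case
  proof
    assume "h = (\<lambda>x. cos (s \<bullet> x))"
    moreover have "(\<lambda>x. cos (s \<bullet> x) * sin (t \<bullet> x)) = (\<lambda>x. (1/2) * sin ((s + t) \<bullet> x) + (-1/2) * sin ((s - t) \<bullet> x))"
      by (auto simp: inner_add_left inner_diff_left sin_add sin_diff algebra_simps)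
    ultimately show ?thesis using c2 by simp
  next
    assume "h = (\<lambda>x. sin (s \<bullet> x))"
    moreover have "(\<lambda>x. sin (s \<bullet> x) * sin (t \<bullet> x)) = (\<lambda>x. (-1/2) * cos ((s + t) \<bullet> x) + (1/2) * cos ((s - t) \<bullet> x))"
      by (auto simp: inner_add_left inner_diff_left cos_add cos_diff algebra_simps)
    ultimately show ?thesis using c1 by simp
  qed
next
  case (addI f g)
  have "(\<lambda>x. h x * f x + h x * g x) \<in> TR" using addI by (intro TR.addI)
  then show ?case by (simp add: distrib_left)
next
  case (smultI f c)
  have "(\<lambda>x. c * (h x * f x)) \<in> TR" using smultI by (intro TR.smultI)
  then show ?case by (simp add: algebra_simps)
qed

lemma TR_mult: assumes f: "f \<in> TR" and g: "g \<in> TR" shows "(\<lambda>x. f x * g x) \<in> TR"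
  using f
proof induction
  case (cosI t) show ?case by (rule TR_gen_mult[OF _ g]) auto
next
  case (sinI t) show ?case by (rule TR_gen_mult[OF _ g]) auto
next
  case (addI f1 f2)
  have "(\<lambda>x. f1 x * g x + f2 x * g x) \<in> TR" using addI by (intro TR.addI)
  then show ?case by (simp add: distrib_right)
next
  case (smultI f c)
  have "(\<lambda>x. c * (f x * g x)) \<in> TR" using smultI by (intro TR.smultI)
  then show ?case by (simp add: algebra_simps)
qed

lemma TR_cont: "f \<in> TR \<Longrightarrow> continuous_on UNIV f"
  by (induction rule: TR.induct) (auto intro!: continuous_intros)

lemma TR_bdd: "f \<in> TR \<Longrightarrow> \<exists>B. \<forall>x. \<bar>f x\<bar> \<le> B"
proof (induction rule: TR.induct)
  case (cosI t) show ?case by (intro exI[of _ 1]) auto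
next
  case (sinI t) show ?case by (intro exI[of _ 1]) auto
next
  case (addI f g)
  then obtain B1 B2 where "\<And>x. \<bar>f x\<bar> \<le> B1" "\<And>x. \<bar>g x\<bar> \<le> B2" by blast
  then show ?case by (intro exI[of _ "B1 + B2"]) (auto intro: order_trans[OF abs_triangle_ineq] add_mono)
next
  case (smultI f c)
  then obtain B where "\<And>x. \<bar>f x\<bar> \<le> B" by blast
  then show ?case by (intro exI[of _ "\<bar>c\<bar> * B"]) (auto simp: abs_mult intro: mult_left_mono)
qed

lemma bdd_growth: "\<bar>s\<bar> \<le> (1::real) \<Longrightarrow> \<bar>s\<bar> \<le> 1 * (1 + npow \<bar>t\<bar> r)"
  using npow_nonneg[of "\<bar>t\<bar>" r] by simp

lemma sin_growth: "\<bar>sin s\<bar> \<le> 1 + npow t r"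
  using abs_sin_le_one[of s] npow_nonneg[of t r] by linarith

lemma cos_growth: "\<bar>cos s\<bar> \<le> 1 + npow t r"
  using abs_cos_le_one[of s] npow_nonneg[of t r] by linarith

lemma TR_conv:
  fixes Q :: "nat \<Rightarrow> 'a::euclidean_space measure"
  assumes q: "q \<ge> 1" and P: "P \<in> P_class q" and Q: "\<And>n. Q n \<in> P_class q"
    and d: "(\<lambda>n. d_F q (Q n) P) \<longlonglongrightarrow> 0"
  shows "f \<in> TR \<Longrightarrow> (\<lambda>n. \<integral>x. f x \<partial>Q n) \<longlonglongrightarrow> (\<integral>x. f x \<partial>P)"
proof (induction rule: TR.induct)
  case (cosI t)
  show ?case
    by (rule ridge_conv[where ?\<psi>0.0=cos and ?\<psi>1.0="\<lambda>s. - sin s" and ?\<psi>2.0="\<lambda>s. - cos s" and ?\<psi>3.0=sin and B=1, OF q P Q d])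
       (auto intro!: derivative_eq_intros continuous_intros sin_growth cos_growth)
next
  case (sinI t)
  show ?case
    by (rule ridge_conv[where ?\<psi>0.0=sin and ?\<psi>1.0=cos and ?\<psi>2.0="\<lambda>s. - sin s" and ?\<psi>3.0="\<lambda>s. - cos s" and B=1, OF q P Q d])
       (auto intro!: derivative_eq_intros continuous_intros sin_growth cos_growth)
next
  case (addI f g)
  have int: "integrable M h" if hM: "M \<in> P_class q" and hh: "h \<in> TR" for M h
  proof -
    obtain B where "\<And>x. \<bar>h x\<bar> \<le> B" using TR_bdd[OF hh] by blast
    then show ?thesis by (rule integrable_bdd_cont[OF hM TR_cont[OF hh]])
  qed
  show ?case
    using tendsto_add[OF addI.IH] int[OF Q addI.hyps(1)] int[OF Q addI.hyps(2)]
      int[OF P addI.hyps(1)] int[OF P addI.hyps(2)] by simp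
next
  case (smultI f c)
  then show ?case by (simp add: tendsto_mult_left)
qed


lemma wpos: "(1::real) + y^2 > 0" by (smt (verit) zero_le_power2)

lemma psiT_d0: "((\<lambda>y. y^2 / (1 + y^2)) has_real_derivative (2*y/(1+y^2)^2)) (at y)"
proof -
  have "((\<lambda>y. y^2 / (1 + y^2)) has_real_derivative ((2*y) * (1+y^2) - y^2 * (2*y)) / ((1+y^2)*(1+y^2))) (at y)"
    using wpos[of y] by (intro DERIV_divide) (auto intro!: derivative_eq_intros)
  moreover have "((2*y) * (1+y^2) - y^2 * (2*y)) / ((1+y^2)*(1+y^2)) = 2*y/(1+y^2)^2"
    using wpos[of y] by (simp add: power2_eq_square algebra_simps)
  ultimately show ?thesis by simp
qed

lemma psiT_d1: "((\<lambda>y. 2*y/(1+y^2)^2) has_real_derivative ((2 - 6*y^2)/(1+y^2)^3)) (at y)"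
proof -
  have "((\<lambda>y. 2*y/(1+y^2)^2) has_real_derivative (2 * (1+y^2)^2 - (2*y) * (2 * (1+y^2) * (2*y))) / ((1+y^2)^2*(1+y^2)^2)) (at y)"
    using wpos[of y] by (intro DERIV_divide) (auto intro!: derivative_eq_intros)
  moreover have "(2 * (1+y^2)^2 - (2*y) * (2 * (1+y^2) * (2*y))) / ((1+y^2)^2*(1+y^2)^2) = (2 - 6*y^2)/(1+y^2)^3"
  proof -
    have w: "1 + y^2 \<noteq> 0" using wpos[of y] by simp
    show ?thesis using w by (simp add: divide_simps) algebra
  qed
  ultimately show ?thesis by simp
qed

lemma psiT_d2: "((\<lambda>y. (2 - 6*y^2)/(1+y^2)^3) has_real_derivative ((24*y^3 - 24*y)/(1+y^2)^4)) (at y)"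
proof -
  have "((\<lambda>y. (2 - 6*y^2)/(1+y^2)^3) has_real_derivative ((- (6 * (2*y))) * (1+y^2)^3 - (2 - 6*y^2) * (3 * (1+y^2)^2 * (2*y))) / ((1+y^2)^3*(1+y^2)^3)) (at y)"
    using wpos[of y] by (intro DERIV_divide) (auto intro!: derivative_eq_intros)
  moreover have "((- (6 * (2*y))) * (1+y^2)^3 - (2 - 6*y^2) * (3 * (1+y^2)^2 * (2*y))) / ((1+y^2)^3*(1+y^2)^3) = (24*y^3 - 24*y)/(1+y^2)^4"
  proof -
    have w: "1 + y^2 \<noteq> 0" using wpos[of y] by simp
    show ?thesis using w by (simp add: divide_simps) algebra
  qed
  ultimately show ?thesis by simp
qed

definition psiT :: "real \<Rightarrow> real" where "psiT y = y^2 / (1 + y^2)"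

lemma absy_le_w: "\<bar>y\<bar> \<le> 1 + (y::real)^2"
proof (cases "\<bar>y\<bar> \<le> 1")
  case True then show ?thesis by (smt (verit) zero_le_power2)
next
  case False
  hence "\<bar>y\<bar> * 1 \<le> \<bar>y\<bar> * \<bar>y\<bar>" by (intro mult_left_mono) auto
  then show ?thesis by (simp add: power2_eq_square abs_mult[symmetric])
qed

lemma w_le_pow: assumes "(1::real) \<le> w" "0 < k" shows "w \<le> w ^ k"
  using power_increasing[of 1 k w] assms by simp

lemma frac_le: assumes "\<bar>a\<bar> \<le> K * d" "(0::real) < d" shows "\<bar>a / d\<bar> \<le> K"
  using assms by (simp add: abs_divide divide_le_eq)

lemma psiT_b1: "\<bar>2*y/(1+y^2)^2\<bar> \<le> (24::real)"
proof (rule frac_le)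
  let ?w = "1 + y^2"
  have w1: "1 \<le> ?w" by simp
  have ww: "?w \<le> ?w^2" by (rule w_le_pow[OF w1]) simp
  have "\<bar>2*y\<bar> \<le> 2 * ?w" using absy_le_w[of y] by simp
  also have "\<dots> \<le> 2 * ?w^2" using ww by simp
  also have "\<dots> \<le> 24 * ?w^2" by simp
  finally show "\<bar>2*y\<bar> \<le> 24 * ?w^2" .
qed (use wpos[of y] in simp)

lemma psiT_b2: "\<bar>(2 - 6*y^2)/(1+y^2)^3\<bar> \<le> (24::real)"
proof (rule frac_le)
  let ?w = "1 + y^2"
  have w1: "1 \<le> ?w" by simp
  have ww: "?w \<le> ?w^3" by (rule w_le_pow[OF w1]) simp
  have "\<bar>2 - 6*y^2\<bar> \<le> 6 * ?w" by (simp add: abs_le_iff)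
  also have "\<dots> \<le> 6 * ?w^3" using ww by simp
  also have "\<dots> \<le> 24 * ?w^3" using w1 by simp
  finally show "\<bar>2 - 6*y^2\<bar> \<le> 24 * ?w^3" .
qed (use wpos[of y] in simp)

lemma psiT_b3: "\<bar>(24*y^3 - 24*y)/(1+y^2)^4\<bar> \<le> (24::real)"
proof (rule frac_le)
  let ?w = "1 + y^2"
  have w1: "1 \<le> ?w" by simp
  have a: "\<bar>y^2 - 1\<bar> \<le> ?w" by (simp add: abs_le_iff)
  have "24*y^3 - 24*y = 24 * (y * (y^2 - 1))" by (simp add: algebra_simps power3_eq_cube power2_eq_square)
  hence "\<bar>24*y^3 - 24*y\<bar> = 24 * (\<bar>y\<bar> * \<bar>y^2 - 1\<bar>)" by (simp add: abs_mult)
  also have "\<dots> \<le> 24 * (?w * ?w)" using absy_le_w[of y] a by (intro mult_left_mono mult_mono) auto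
  also have "\<dots> = 24 * ?w^2" by (simp add: power2_eq_square)
  also have "\<dots> \<le> 24 * ?w^4" using power_increasing[of 2 4 ?w] w1 by simp
  finally show "\<bar>24*y^3 - 24*y\<bar> \<le> 24 * ?w^4" .
qed (use wpos[of y] in simp)

lemma growth24: "\<bar>a\<bar> \<le> 24 \<Longrightarrow> \<bar>a\<bar> \<le> 24 * (1 + npow t r)"
  using npow_nonneg[of t r] by (smt (verit) mult_le_cancel_left1)

lemma psiT_ge0: "0 \<le> psiT y" and psiT_le1: "psiT y \<le> 1"
  unfolding psiT_def using wpos[of y] by (auto simp: divide_le_eq)

lemma psiT_alt: "psiT y = 1 - 1 / (1 + y^2)"
  unfolding psiT_def using wpos[of y] by (simp add: field_simps)

lemma psiT_mono: assumes "\<bar>y\<bar> \<le> \<bar>z\<bar>" shows "psiT y \<le> psiT z"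
proof -
  have "y^2 \<le> z^2" using assms by (metis abs_le_square_iff)
  hence "1 / (1 + z^2) \<le> 1 / (1 + y^2)" using wpos[of y] by (intro divide_left_mono) auto
  then show ?thesis by (simp add: psiT_alt)
qed

lemma psiT_half: assumes "\<bar>y\<bar> \<ge> 1" shows "psiT y \<ge> 1/2"
proof -
  have "1 \<le> y^2" using assms by (metis abs_le_square_iff abs_one one_power2)
  hence "1 / (1 + y^2) \<le> 1 / 2" by (intro divide_left_mono) auto
  then show ?thesis by (simp add: psiT_alt)
qed

lemma psiT_cont: "continuous_on UNIV psiT"
  unfolding psiT_def by (intro continuous_intros) (metis wpos less_irrefl)

lemma psiT_lim: "(\<lambda>m. psiT (c / (real m + 1))) \<longlonglongrightarrow> 0"
proof -
  have "(\<lambda>m. c / (real m + 1)) \<longlonglongrightarrow> 0"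
    by (intro tendsto_divide_0[OF tendsto_const] filterlim_at_top_imp_at_infinity
        filterlim_at_top_mono[OF filterlim_real_sequentially]) auto
  moreover have "isCont psiT 0" using psiT_cont by (simp add: continuous_on_eq_continuous_at)
  ultimately have "(\<lambda>m. psiT (c / (real m + 1))) \<longlonglongrightarrow> psiT 0" by (rule isCont_tendsto_compose[rotated])
  then show ?thesis by (simp add: psiT_def)
qed

definition tf :: "real \<Rightarrow> 'a::euclidean_space \<Rightarrow> real" where
  "tf L x = (\<Sum>b\<in>Basis. psiT ((x \<bullet> b) / L))"

lemma tf_cont: "continuous_on UNIV (tf L)"
  unfolding tf_def divide_inverse by (intro continuous_intros continuous_on_compose2[OF psiT_cont]) auto

lemma tf_ge0: "0 \<le> tf L x" unfolding tf_def by (intro sum_nonneg) (simp add: psiT_ge0)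

lemma tf_le: "tf L x \<le> real DIM('a)" for x :: "'a::euclidean_space"
proof -
  have "tf L x \<le> (\<Sum>b\<in>(Basis::'a set). 1)" unfolding tf_def by (intro sum_mono) (simp add: psiT_le1)
  then show ?thesis by simp
qed

lemma tf_big: assumes "b \<in> Basis" "\<bar>x \<bullet> b\<bar> \<ge> L" "L > 0" shows "tf L x \<ge> 1/2"
proof -
  have "L / L \<le> \<bar>x \<bullet> b\<bar> / L" by (rule divide_right_mono) (use assms(2,3) in auto)
  hence "1 \<le> \<bar>x \<bullet> b\<bar> / L" using assms(3) by simp
  also have "\<bar>x \<bullet> b\<bar> / L = \<bar>(x \<bullet> b) / L\<bar>" by (rule abs_div_pos[OF assms(3)])
  finally have "1/2 \<le> psiT ((x \<bullet> b) / L)" by (rule psiT_half)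
  also have "\<dots> \<le> tf L x" unfolding tf_def
    by (rule member_le_sum) (use assms(1) psiT_ge0 in auto)
  finally show ?thesis .
qed

lemma tf_mono: assumes L: "0 < L" and LL: "L \<le> L'" shows "tf L' x \<le> tf L x"
  unfolding tf_def
proof (rule sum_mono, rule psiT_mono)
  fix b :: 'a
  have L'0: "0 < L'" using L LL by linarith
  have "\<bar>x \<bullet> b\<bar> / L' \<le> \<bar>x \<bullet> b\<bar> / L"
    by (rule divide_left_mono[OF LL abs_ge_zero mult_pos_pos[OF L'0 L]])
  then show "\<bar>x \<bullet> b / L'\<bar> \<le> \<bar>x \<bullet> b / L\<bar>"
    by (simp only: abs_div_pos[OF L'0] abs_div_pos[OF L])
qed

lemma tf_lim: "(\<lambda>m. tf (real m + 1) x) \<longlonglongrightarrow> 0"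
proof -
  have "(\<lambda>m. \<Sum>b\<in>(Basis::'a set). psiT ((x \<bullet> b) / (real m + 1))) \<longlonglongrightarrow> (\<Sum>b\<in>(Basis::'a set). 0)"
    by (intro tendsto_sum psiT_lim)
  then show ?thesis by (simp add: tf_def)
qed


lemma psiT_fun: "psiT = (\<lambda>y. y^2 / (1 + y^2))"
  by (simp add: psiT_def fun_eq_iff)

lemma tf_abs: "\<bar>tf L x\<bar> \<le> real DIM('a)" for x :: "'a::euclidean_space"
  using tf_ge0[of L x] tf_le[of L x] by simp

lemma wne: "(1 + y^2) ^ k \<noteq> (0::real)"
  using wpos[of y] by simp

lemma wne1: "1 + y^2 \<noteq> (0::real)"
  using wpos[of y] by simp

lemma tf_integrable: "M \<in> P_class q \<Longrightarrow> integrable M (tf L :: 'a::euclidean_space \<Rightarrow> real)"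
  by (rule integrable_bdd_cont[OF _ tf_cont, of _ _ _ "real DIM('a)"]) (use tf_abs in auto)

lemma tf_conv:
  fixes Q :: "nat \<Rightarrow> 'a::euclidean_space measure"
  assumes q: "q \<ge> 1" and P: "P \<in> P_class q" and Q: "\<And>n. Q n \<in> P_class q"
    and d: "(\<lambda>n. d_F q (Q n) P) \<longlonglongrightarrow> 0"
  shows "(\<lambda>n. \<integral>x. tf L x \<partial>Q n) \<longlonglongrightarrow> (\<integral>x. tf L x \<partial>P)"
proof -
  have one: "(\<lambda>n. \<integral>x. psiT (((1 / L) *\<^sub>R b) \<bullet> x) \<partial>Q n) \<longlonglongrightarrow> (\<integral>x. psiT (((1 / L) *\<^sub>R b) \<bullet> x) \<partial>P)" for b :: 'a
  proof (rule ridge_conv[where ?\<psi>1.0="\<lambda>y. 2*y/(1+y^2)^2" and ?\<psi>2.0="\<lambda>y. (2 - 6*y^2)/(1+y^2)^3"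
          and ?\<psi>3.0="\<lambda>y. (24*y^3 - 24*y)/(1+y^2)^4" and B=24, OF q P Q d])
    show "(psiT has_real_derivative 2*y/(1+y^2)^2) (at y)" for y using psiT_d0[of y] by (simp add: psiT_fun)
    show "((\<lambda>y. 2*y/(1+y^2)^2) has_real_derivative (2 - 6*y^2)/(1+y^2)^3) (at y)" for y by (rule psiT_d1)
    show "((\<lambda>y. (2 - 6*y^2)/(1+y^2)^3) has_real_derivative (24*y^3 - 24*y)/(1+y^2)^4) (at y)" for y by (rule psiT_d2)
    show "continuous_on UNIV (\<lambda>y::real. (24*y^3 - 24*y)/(1+y^2)^4)"
      by (intro continuous_intros) (simp add: wne1)
    show "(0::real) \<le> 24" by simp
    show "\<bar>2*y/(1+y^2)^2\<bar> \<le> 24 * (1 + npow \<bar>y\<bar> (q - 1))" for y by (rule growth24[OF psiT_b1])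
    show "\<bar>(2 - 6*y^2)/(1+y^2)^3\<bar> \<le> 24 * (1 + npow \<bar>y\<bar> (q - 1))" for y by (rule growth24[OF psiT_b2])
    show "\<bar>(24*y^3 - 24*y)/(1+y^2)^4\<bar> \<le> 24 * (1 + npow \<bar>y\<bar> (q - 1))" for y by (rule growth24[OF psiT_b3])
  qed
  have eq: "(\<lambda>x. psiT (((1 / L) *\<^sub>R b) \<bullet> x)) = (\<lambda>x. psiT ((x \<bullet> b) / L))" for b :: 'a
    by (simp add: inner_commute)
  have int: "integrable M (\<lambda>x. psiT ((x \<bullet> b) / L))" if "M \<in> P_class q" for M and b :: 'a
    by (rule integrable_bdd_cont[OF that _, of _ 1])
       (auto simp: divide_inverse psiT_ge0 psiT_le1 intro!: continuous_on_compose2[OF psiT_cont] continuous_intros)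
  have "(\<lambda>n. \<Sum>b\<in>Basis. \<integral>x. psiT ((x \<bullet> b) / L) \<partial>Q n) \<longlonglongrightarrow> (\<Sum>b\<in>Basis. \<integral>x. psiT ((x \<bullet> b) / L) \<partial>P)"
    by (intro tendsto_sum) (use one eq in simp)
  then show ?thesis
    unfolding tf_def using int[OF Q] int[OF P] by (simp add: integral_sum)
qed

lemma tight:
  fixes Q :: "nat \<Rightarrow> 'a::euclidean_space measure"
  assumes q: "q \<ge> 1" and P: "P \<in> P_class q" and Q: "\<And>n. Q n \<in> P_class q"
    and d: "(\<lambda>n. d_F q (Q n) P) \<longlonglongrightarrow> 0" and e: "e > 0"
  shows "\<exists>L>0. (\<forall>n. (\<integral>x. tf L x \<partial>Q n) \<le> e) \<and> (\<integral>x. tf L x \<partial>P) \<le> e"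
proof -
  define T where "T n m = (\<integral>x. tf (real m + 1) x \<partial>Q n)" for n m
  define S where "S m = (\<integral>x. tf (real m + 1) x \<partial>P)" for m
  have dct: "(\<lambda>m. \<integral>x. tf (real m + 1) x \<partial>M) \<longlonglongrightarrow> 0" if M: "M \<in> P_class q" for M :: "'a measure"
  proof -
    interpret prob_space M using PC_prob[OF M] .
    have "(\<lambda>m. \<integral>x. tf (real m + 1) x \<partial>M) \<longlonglongrightarrow> (\<integral>x. 0 \<partial>M)"
    proof (rule integral_dominated_convergence[where w="\<lambda>x. real DIM('a)"])
      show "AE x in M. (\<lambda>m. tf (real m + 1) x) \<longlonglongrightarrow> 0" by (simp add: tf_lim)
      show "AE x in M. norm (tf (real m + 1) x) \<le> real DIM('a)" for m
        by (intro AE_I2) (simp only: real_norm_def, rule tf_abs)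
      show "(\<lambda>x. tf (real m + 1) x) \<in> borel_measurable M" for m
        by (rule meas_cont[OF PC_sets[OF M] tf_cont])
    qed auto
    then show ?thesis by simp
  qed
  have "\<exists>m. (\<forall>n. T n m \<le> e) \<and> S m \<le> e"
  proof (rule unif_tail[OF _ _ _ _ e])
    show "T n m' \<le> T n m" if "m \<le> m'" for n m m'
      unfolding T_def
      by (rule integral_mono[OF tf_integrable[OF Q] tf_integrable[OF Q]]) (rule tf_mono, use that in auto)
    show "(\<lambda>m. T n m) \<longlonglongrightarrow> 0" for n unfolding T_def by (rule dct[OF Q])
    show "S \<longlonglongrightarrow> 0" unfolding S_def by (rule dct[OF P])
    show "(\<lambda>n. T n m) \<longlonglongrightarrow> S m" for m unfolding T_def S_def by (rule tf_conv[OF q P Q d])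
  qed
  then obtain m where "\<forall>n. T n m \<le> e" "S m \<le> e" by blast
  then show ?thesis unfolding T_def S_def by (intro exI[of _ "real m + 1"]) auto
qed


lemma TR_poly:
  fixes w :: "'a::euclidean_space \<Rightarrow> 'a"
  shows "real_polynomial_function p \<Longrightarrow> (\<lambda>x. p (\<Sum>b\<in>Basis. sin (w b \<bullet> x) *\<^sub>R b)) \<in> TR"
proof (induction rule: real_polynomial_function.induct)
  case (linear f)
  have lf: "linear f" using linear by (rule bounded_linear.linear)
  have "(\<lambda>x. \<Sum>b\<in>(Basis::'a set). f b * sin (w b \<bullet> x)) \<in> TR"
    by (intro TR_sum TR.smultI TR.sinI) auto
  moreover have "f (\<Sum>b\<in>Basis. sin (w b \<bullet> x) *\<^sub>R b) = (\<Sum>b\<in>Basis. f b * sin (w b \<bullet> x))" for x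
    by (simp add: real_vector.linear_sum[OF lf] linear_cmul[OF lf] mult.commute)
  ultimately show ?case by simp
next
  case (const c) show ?case by (rule TR_const)
next
  case (add f g) show ?case by (rule TR.addI[OF add.IH])
next
  case (mult f g) show ?case by (rule TR_mult[OF mult.IH])
qed

lemma weak_of_dF:
  fixes Q :: "nat \<Rightarrow> 'a::euclidean_space measure"
  assumes q: "q \<ge> 1" and P: "P \<in> P_class q" and Q: "\<And>n. Q n \<in> P_class q"
    and d: "(\<lambda>n. d_F q (Q n) P) \<longlonglongrightarrow> 0"
  shows "weak_conv Q P"
  unfolding weak_conv_def
proof (intro allI impI)
  fix h :: "'a \<Rightarrow> real" assume h: "continuous_on UNIV h \<and> bounded (range h)"
  hence hc: "continuous_on UNIV h" and hb: "bounded (range h)" by auto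
  obtain Mb where Mb: "\<And>x. \<bar>h x\<bar> \<le> Mb" using hb unfolding bounded_real by auto
  have Mb0: "Mb \<ge> 0" using Mb[of 0] by linarith
  show "(\<lambda>n. \<integral>x. h x \<partial>Q n) \<longlonglongrightarrow> (\<integral>x. h x \<partial>P)"
  proof (rule LIMSEQ_I)
    fix r :: real assume r: "r > 0"
    define \<epsilon> where "\<epsilon> = r / 6"
    have \<epsilon>0: "\<epsilon> > 0" using r by (simp add: \<epsilon>_def)
    define e' where "e' = \<epsilon> / (4 * Mb + 1)"
    have e'0: "e' > 0" using \<epsilon>0 Mb0 by (simp add: e'_def)
    have Me': "4 * Mb * e' < \<epsilon>"
    proof -
      have "4 * Mb * e' = \<epsilon> * (4 * Mb / (4 * Mb + 1))" using Mb0 by (simp add: e'_def field_simps)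
      also have "\<dots> < \<epsilon> * 1" using \<epsilon>0 Mb0 by (intro mult_strict_left_mono) auto
      finally show ?thesis by simp
    qed
    obtain L where L0: "L > 0" and LQ: "\<And>n. (\<integral>x. tf L x \<partial>Q n) \<le> e'" and LP: "(\<integral>x. tf L x \<partial>P) \<le> e'"
      using tight[OF q P Q d e'0] by blast
    define \<omega> where "\<omega> = pi / (2 * L)"
    have \<omega>0: "\<omega> > 0" using L0 by (simp add: \<omega>_def)
    define rr where "rr x = (\<Sum>b\<in>Basis. ((1 / \<omega>) * arcsin (sin (\<omega> * (x \<bullet> b)))) *\<^sub>R b)" for x :: 'a
    define g where "g x = h (rr x)" for x
    define ee where "ee x = (\<Sum>b\<in>Basis. sin ((\<omega> *\<^sub>R b) \<bullet> x) *\<^sub>R b)" for x :: 'a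
    define G where "G y = h (\<Sum>b\<in>Basis. ((1 / \<omega>) * arcsin (y \<bullet> b)) *\<^sub>R b)" for y :: 'a
    define S where "S = cbox (- One) (One :: 'a)"
    have ee_comp: "ee x \<bullet> b = sin (\<omega> * (x \<bullet> b))" if b: "b \<in> Basis" for x b
    proof -
      have "ee x \<bullet> b = (\<Sum>b'\<in>Basis. sin ((\<omega> *\<^sub>R b') \<bullet> x) * (b' \<bullet> b))"
        by (simp add: ee_def inner_sum_left)
      also have "\<dots> = sin ((\<omega> *\<^sub>R b) \<bullet> x)"
        using b by (simp add: inner_Basis if_distrib sum.delta' cong: if_cong)
      finally show ?thesis by (simp add: inner_commute)
    qed
    have ee_S: "ee x \<in> S" for x
      unfolding S_def mem_box using ee_comp by (auto simp: inner_minus_left)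
    have Gee: "G (ee x) = g x" for x
      unfolding G_def g_def rr_def by (rule arg_cong[where f=h], rule sum.cong) (auto simp: ee_comp)
    have S_comp: "-1 \<le> y \<bullet> b \<and> y \<bullet> b \<le> 1" if "y \<in> S" "b \<in> Basis" for y b
      using that unfolding S_def mem_box by (auto simp: inner_minus_left)
    have G_cont: "continuous_on S G"
      unfolding G_def
    proof (rule continuous_on_compose2[OF hc _ subset_UNIV])
      show "continuous_on S (\<lambda>y. \<Sum>b\<in>Basis. ((1 / \<omega>) * arcsin (y \<bullet> b)) *\<^sub>R b)"
        by (intro continuous_intros) (use S_comp in auto)
    qed
    have ee_cont: "continuous_on UNIV ee" unfolding ee_def by (intro continuous_intros)
    have g_cont: "continuous_on UNIV g"
    proof -
      have "continuous_on UNIV (\<lambda>x. G (ee x))"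
        by (rule continuous_on_compose2[OF G_cont ee_cont]) (use ee_S in auto)
      then show ?thesis using Gee by simp
    qed
    have rr_id: "rr x = x" if xb: "\<forall>b\<in>Basis. \<bar>x \<bullet> b\<bar> \<le> L" for x
    proof -
      have "(1 / \<omega>) * arcsin (sin (\<omega> * (x \<bullet> b))) = x \<bullet> b" if b: "b \<in> Basis" for b
      proof -
        have "\<bar>\<omega> * (x \<bullet> b)\<bar> \<le> \<omega> * L" using xb b \<omega>0 by (simp add: abs_mult mult_left_mono)
        also have "\<omega> * L = pi / 2" using L0 by (simp add: \<omega>_def)
        finally have "arcsin (sin (\<omega> * (x \<bullet> b))) = \<omega> * (x \<bullet> b)"
          by (intro arcsin_sin) (auto simp: abs_le_iff)
        then show ?thesis using \<omega>0 by simp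
      qed
      then have "rr x = (\<Sum>b\<in>Basis. (x \<bullet> b) *\<^sub>R b)" unfolding rr_def by (intro sum.cong) auto
      then show ?thesis by (simp add: euclidean_representation)
    qed
    have hg: "\<bar>h x - g x\<bar> \<le> 4 * Mb * tf L x" for x
    proof (cases "\<forall>b\<in>Basis. \<bar>x \<bullet> b\<bar> \<le> L")
      case True
      then show ?thesis using rr_id[OF True] tf_ge0[of L x] Mb0 by (simp add: g_def)
    next
      case False
      then obtain b where b: "b \<in> Basis" "\<bar>x \<bullet> b\<bar> > L" by auto
      have t: "tf L x \<ge> 1/2" by (rule tf_big[OF b(1) _ L0]) (use b in auto)
      have "\<bar>h x - g x\<bar> \<le> 2 * Mb" using Mb[of x] Mb[of "rr x"] unfolding g_def by linarith
      also have "\<dots> \<le> 4 * Mb * tf L x" using t Mb0 mult_left_mono[OF t, of "4 * Mb"] by simp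
      finally show ?thesis .
    qed
    have "compact S" unfolding S_def by (rule compact_cbox)
    then obtain P0 where P0: "real_polynomial_function P0" and P0S: "\<And>y. y \<in> S \<Longrightarrow> \<bar>G y - P0 y\<bar> < \<epsilon>"
      using Stone_Weierstrass_real_polynomial_function[OF _ G_cont \<epsilon>0] by blast
    define pe where "pe x = P0 (ee x)" for x
    have peTR: "pe \<in> TR"
      unfolding pe_def[abs_def] ee_def by (rule TR_poly[OF P0])
    have gpe: "\<bar>g x - pe x\<bar> < \<epsilon>" for x using P0S[OF ee_S[of x]] Gee[of x] by (simp add: pe_def)
    obtain Bp where Bp: "\<And>x. \<bar>pe x\<bar> \<le> Bp" using TR_bdd[OF peTR] by blast
    have pec: "continuous_on UNIV pe" by (rule TR_cont[OF peTR])
    have est: "\<bar>(\<integral>x. h x \<partial>M) - (\<integral>x. pe x \<partial>M)\<bar> \<le> 4 * Mb * e' + \<epsilon>"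
      if M: "M \<in> P_class q" and Mt: "(\<integral>x. tf L x \<partial>M) \<le> e'" for M
    proof -
      interpret prob_space M using PC_prob[OF M] .
      have hi: "integrable M h" by (rule integrable_bdd_cont[OF M hc Mb])
      have pi': "integrable M pe" by (rule integrable_bdd_cont[OF M pec Bp])
      have ti: "integrable M (tf L)" by (rule tf_integrable[OF M])
      have "(\<integral>x. h x \<partial>M) - (\<integral>x. pe x \<partial>M) = (\<integral>x. h x - pe x \<partial>M)" using hi pi' by simp
      also have "\<bar>\<dots>\<bar> \<le> (\<integral>x. \<bar>h x - pe x\<bar> \<partial>M)" by (rule integral_abs_bound)
      also have "\<dots> \<le> (\<integral>x. 4 * Mb * tf L x + \<epsilon> \<partial>M)"
      proof (rule integral_mono)
        show "integrable M (\<lambda>x. \<bar>h x - pe x\<bar>)" using hi pi' by simp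
        show "integrable M (\<lambda>x. 4 * Mb * tf L x + \<epsilon>)" using ti by simp
        fix x
        show "\<bar>h x - pe x\<bar> \<le> 4 * Mb * tf L x + \<epsilon>" using hg[of x] gpe[of x] by linarith
      qed
      also have "\<dots> = 4 * Mb * (\<integral>x. tf L x \<partial>M) + \<epsilon>" using ti by (simp add: prob_space)
      also have "\<dots> \<le> 4 * Mb * e' + \<epsilon>" using Mt Mb0 by (simp add: mult_left_mono)
      finally show ?thesis .
    qed
    have "(\<lambda>n. \<integral>x. pe x \<partial>Q n) \<longlonglongrightarrow> (\<integral>x. pe x \<partial>P)" by (rule TR_conv[OF q P Q d peTR])
    then obtain N where N: "\<And>n. n \<ge> N \<Longrightarrow> \<bar>(\<integral>x. pe x \<partial>Q n) - (\<integral>x. pe x \<partial>P)\<bar> < \<epsilon>"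
      using \<epsilon>0 unfolding LIMSEQ_def dist_real_def by blast
    show "\<exists>N. \<forall>n\<ge>N. norm ((\<integral>x. h x \<partial>Q n) - (\<integral>x. h x \<partial>P)) < r"
    proof (intro exI allI impI)
      fix n assume n: "n \<ge> N"
      have a: "\<bar>(\<integral>x. h x \<partial>Q n) - (\<integral>x. pe x \<partial>Q n)\<bar> \<le> 4 * Mb * e' + \<epsilon>" by (rule est[OF Q LQ])
      have b: "\<bar>(\<integral>x. h x \<partial>P) - (\<integral>x. pe x \<partial>P)\<bar> \<le> 4 * Mb * e' + \<epsilon>" by (rule est[OF P LP])
      have c: "\<bar>(\<integral>x. pe x \<partial>Q n) - (\<integral>x. pe x \<partial>P)\<bar> < \<epsilon>" by (rule N[OF n])
      show "norm ((\<integral>x. h x \<partial>Q n) - (\<integral>x. h x \<partial>P)) < r"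
      proof -
        have r6: "r = 6 * \<epsilon>" by (simp add: \<epsilon>_def)
        from a have a1: "(\<integral>x. h x \<partial>Q n) - (\<integral>x. pe x \<partial>Q n) \<le> 4 * Mb * e' + \<epsilon>" "(\<integral>x. pe x \<partial>Q n) - (\<integral>x. h x \<partial>Q n) \<le> 4 * Mb * e' + \<epsilon>"
          by (simp_all add: abs_le_iff)
        from b have b1: "(\<integral>x. h x \<partial>P) - (\<integral>x. pe x \<partial>P) \<le> 4 * Mb * e' + \<epsilon>" "(\<integral>x. pe x \<partial>P) - (\<integral>x. h x \<partial>P) \<le> 4 * Mb * e' + \<epsilon>"
          by (simp_all add: abs_le_iff)
        from c have c1: "(\<integral>x. pe x \<partial>Q n) - (\<integral>x. pe x \<partial>P) < \<epsilon>" "(\<integral>x. pe x \<partial>P) - (\<integral>x. pe x \<partial>Q n) < \<epsilon>"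
          by (simp_all add: abs_less_iff)
        have "(\<integral>x. h x \<partial>Q n) - (\<integral>x. h x \<partial>P) < r" "(\<integral>x. h x \<partial>P) - (\<integral>x. h x \<partial>Q n) < r"
          using a1 b1 c1 Me' r6 by linarith+
        then show ?thesis by (simp add: abs_less_iff)
      qed
    qed
  qed
qed


lemma wpos': "(0::real) < 1 + y^2" by (smt (verit) zero_le_power2)

lemma wne': "1 + y^2 \<noteq> (0::real)" using wpos'[of y] by simp

lemma dw: "((\<lambda>y. (1 + y^2) powr a) has_real_derivative (a * (1 + y^2) powr (a - 1) * (2 * y))) (at y)"
proof -
  have 1: "((\<lambda>z. z powr a) has_real_derivative a * (1 + y^2) powr (a - 1)) (at (1 + y^2))"
    by (rule has_real_derivative_powr) (rule wpos')
  have 2: "((\<lambda>y. 1 + y^2) has_real_derivative 2 * y) (at y)"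
    by (auto intro!: derivative_eq_intros)
  show ?thesis using DERIV_chain2[OF 1 2] by simp
qed

lemma dyw: "((\<lambda>y. y ^ k * (1 + y^2) powr a) has_real_derivative
   (real k * y ^ (k - 1) * (1 + y^2) powr a + y ^ k * (a * (1 + y^2) powr (a - 1) * (2 * y)))) (at y)"
  by (rule DERIV_mult[OF _ dw, THEN DERIV_cong]) (auto intro!: derivative_eq_intros)

definition mp0 :: "real \<Rightarrow> real \<Rightarrow> real" where "mp0 q y = (1 + y^2) powr (q / 2)"
definition mp1 :: "real \<Rightarrow> real \<Rightarrow> real" where "mp1 q y = q * (y * (1 + y^2) powr (q / 2 - 1))"
definition mp2 :: "real \<Rightarrow> real \<Rightarrow> real" where
  "mp2 q y = q * (1 + y^2) powr (q / 2 - 1) + q * (q - 2) * (y^2 * (1 + y^2) powr (q / 2 - 2))"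
definition mp3 :: "real \<Rightarrow> real \<Rightarrow> real" where
  "mp3 q y = 3 * q * (q - 2) * (y * (1 + y^2) powr (q / 2 - 2)) + q * (q - 2) * (q - 4) * (y^3 * (1 + y^2) powr (q / 2 - 3))"

lemma mp_d0: "(mp0 q has_real_derivative mp1 q y) (at y)"
proof -
  have "(mp0 q has_real_derivative (q / 2) * (1 + y^2) powr (q / 2 - 1) * (2 * y)) (at y)"
    unfolding mp0_def[abs_def] by (rule dw)
  then show ?thesis by (simp add: mp1_def algebra_simps)
qed

lemma mp_d1: "(mp1 q has_real_derivative mp2 q y) (at y)"
proof -
  have "((\<lambda>y. q * (y ^ 1 * (1 + y^2) powr (q / 2 - 1))) has_real_derivative
      q * (real 1 * y ^ (1 - 1) * (1 + y^2) powr (q / 2 - 1) + y ^ 1 * ((q / 2 - 1) * (1 + y^2) powr (q / 2 - 1 - 1) * (2 * y)))) (at y)"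
    by (rule DERIV_cmult[OF dyw])
  moreover have "(\<lambda>y. q * (y ^ 1 * (1 + y^2) powr (q / 2 - 1))) = mp1 q" by (simp add: mp1_def fun_eq_iff)
  moreover have "q * (real 1 * y ^ (1 - 1) * (1 + y^2) powr (q / 2 - 1) + y ^ 1 * ((q / 2 - 1) * (1 + y^2) powr (q / 2 - 1 - 1) * (2 * y))) = mp2 q y"
    by (simp add: mp2_def algebra_simps power2_eq_square)
  ultimately show ?thesis by simp
qed

lemma mp_d2: "(mp2 q has_real_derivative mp3 q y) (at y)"
proof -
  have A: "((\<lambda>y. q * (1 + y^2) powr (q / 2 - 1)) has_real_derivative q * ((q / 2 - 1) * (1 + y^2) powr (q / 2 - 1 - 1) * (2 * y))) (at y)"
    by (rule DERIV_cmult[OF dw])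
  have B: "((\<lambda>y. q * (q - 2) * (y ^ 2 * (1 + y^2) powr (q / 2 - 2))) has_real_derivative
      q * (q - 2) * (real 2 * y ^ (2 - 1) * (1 + y^2) powr (q / 2 - 2) + y ^ 2 * ((q / 2 - 2) * (1 + y^2) powr (q / 2 - 2 - 1) * (2 * y)))) (at y)"
    by (rule DERIV_cmult[OF dyw])
  have "(mp2 q has_real_derivative q * ((q / 2 - 1) * (1 + y^2) powr (q / 2 - 1 - 1) * (2 * y)) +
      q * (q - 2) * (real 2 * y ^ (2 - 1) * (1 + y^2) powr (q / 2 - 2) + y ^ 2 * ((q / 2 - 2) * (1 + y^2) powr (q / 2 - 2 - 1) * (2 * y)))) (at y)"
    unfolding mp2_def[abs_def] by (rule DERIV_add[OF A B])
  moreover have "q * ((q / 2 - 1) * (1 + y^2) powr (q / 2 - 1 - 1) * (2 * y)) +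
      q * (q - 2) * (real 2 * y ^ (2 - 1) * (1 + y^2) powr (q / 2 - 2) + y ^ 2 * ((q / 2 - 2) * (1 + y^2) powr (q / 2 - 2 - 1) * (2 * y))) = mp3 q y"
    by (simp add: mp3_def algebra_simps power2_eq_square power3_eq_cube)
  ultimately show ?thesis by simp
qed

lemma mp3_cont: "continuous_on UNIV (mp3 q)"
  unfolding mp3_def[abs_def] by (intro continuous_intros ballI wne')

lemma abs_le_wh: "\<bar>y\<bar> \<le> (1 + y^2) powr (1/2)" for y :: real
proof -
  have "\<bar>y\<bar> = sqrt (y^2)" by simp
  also have "\<dots> \<le> sqrt (1 + y^2)" by (rule real_sqrt_le_mono) simp
  also have "\<dots> = (1 + y^2) powr (1/2)" by (rule powr_half_sqrt[symmetric]) (use wpos'[of y] in simp)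
  finally show ?thesis .
qed

lemma ypow: "\<bar>y\<bar> ^ k * (1 + y^2) powr a \<le> (1 + y^2) powr (a + real k / 2)" for y :: real
proof -
  let ?w = "1 + y^2"
  have w0: "0 < ?w" by (rule wpos')
  have "\<bar>y\<bar> ^ k \<le> (?w powr (1/2)) ^ k" by (rule power_mono[OF abs_le_wh]) simp
  also have "(?w powr (1/2)) ^ k = ?w powr (real k / 2)"
    using w0 by (simp add: powr_realpow[symmetric] powr_powr)
  finally have "\<bar>y\<bar> ^ k * ?w powr a \<le> ?w powr (real k / 2) * ?w powr a" by (rule mult_right_mono) simp
  also have "\<dots> = ?w powr (a + real k / 2)" by (simp add: powr_add[symmetric] add.commute)
  finally show ?thesis .
qed

lemma wmono: "a \<le> b \<Longrightarrow> (1 + y^2) powr a \<le> (1 + y^2) powr (b::real)"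
  by (rule powr_mono) auto

lemma wbound:
  assumes r: "r \<ge> 0"
  shows "(1 + t^2) powr (r / 2) \<le> 2 powr (r / 2) * (1 + npow \<bar>t\<bar> r)"
proof (cases "\<bar>t\<bar> \<le> 1")
  case True
  have "t^2 \<le> 1" using True by (metis abs_le_square_iff abs_one one_power2 abs_square_le_1)
  hence "(1 + t^2) powr (r / 2) \<le> 2 powr (r / 2)" using r by (intro powr_mono2) auto
  also have "\<dots> \<le> 2 powr (r / 2) * (1 + npow \<bar>t\<bar> r)" using npow_nonneg[of "\<bar>t\<bar>" r] by simp
  finally show ?thesis .
next
  case False
  hence t0: "t \<noteq> 0" by auto
  have "1 \<le> t^2" using False by (metis abs_le_square_iff abs_one one_power2 linear)
  hence "1 + t^2 \<le> 2 * t^2" by simp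
  hence "(1 + t^2) powr (r / 2) \<le> (2 * t^2) powr (r / 2)" using r by (intro powr_mono2) auto
  also have "\<dots> = 2 powr (r / 2) * (t^2) powr (r / 2)" by (simp add: powr_mult)
  also have "(t^2) powr (r / 2) = \<bar>t\<bar> powr r"
  proof -
    have e: "t^2 = \<bar>t\<bar> powr 2" using t0 by (simp add: powr_realpow[symmetric])
    have "(t^2) powr (r / 2) = (\<bar>t\<bar> powr 2) powr (r / 2)" by (simp only: e)
    also have "\<dots> = \<bar>t\<bar> powr (2 * (r / 2))" by (rule powr_powr)
    finally show ?thesis by simp
  qed
  also have "\<bar>t\<bar> powr r = npow \<bar>t\<bar> r" using t0 by (simp add: npow_def)
  also have "2 powr (r / 2) * npow \<bar>t\<bar> r \<le> 2 powr (r / 2) * (1 + npow \<bar>t\<bar> r)" by simp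
  finally show ?thesis .
qed

definition Kq :: "real \<Rightarrow> real" where "Kq q = 3 * q * (1 + \<bar>q - 2\<bar>) * (1 + \<bar>q - 4\<bar>)"

lemma Kq_bounds:
  assumes q: "q \<ge> 1"
  shows "q \<le> Kq q" "q + q * \<bar>q - 2\<bar> \<le> Kq q" "3 * q * \<bar>q - 2\<bar> + q * \<bar>q - 2\<bar> * \<bar>q - 4\<bar> \<le> Kq q"
proof -
  define a where "a = \<bar>q - 2\<bar>"
  define b where "b = \<bar>q - 4\<bar>"
  have a0: "a \<ge> 0" and b0: "b \<ge> 0" by (simp_all add: a_def b_def)
  have q0: "q > 0" using q by simp
  have ex: "Kq q = 3 * q + 3 * (q * a) + 3 * (q * b) + 3 * (q * a * b)"
    unfolding Kq_def a_def[symmetric] b_def[symmetric] by (simp add: algebra_simps)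
  have n1: "0 \<le> q * a" "0 \<le> q * b" "0 \<le> q * a * b" using q0 a0 b0 by simp_all
  show "q \<le> Kq q" using ex n1 q0 by linarith
  show "q + q * \<bar>q - 2\<bar> \<le> Kq q" unfolding a_def[symmetric] using ex n1 q0 by linarith
  have "3 * q * a = 3 * (q * a)" by simp
  then show "3 * q * \<bar>q - 2\<bar> + q * \<bar>q - 2\<bar> * \<bar>q - 4\<bar> \<le> Kq q"
    unfolding a_def[symmetric] b_def[symmetric] using ex n1 q0 by linarith
qed

lemma ya1: "\<bar>y\<bar> * (1 + y^2) powr (q / 2 - 1) \<le> (1 + y^2) powr ((q - 1) / 2)" for y q :: real
proof -
  have "\<bar>y\<bar>^1 * (1 + y^2) powr (q / 2 - 1) \<le> (1 + y^2) powr (q / 2 - 1 + real 1 / 2)" by (rule ypow)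
  also have "q / 2 - 1 + real 1 / 2 = (q - 1) / 2" by (simp add: field_simps)
  finally show ?thesis by simp
qed

lemma ya2: "y^2 * (1 + y^2) powr (q / 2 - 2) \<le> (1 + y^2) powr ((q - 1) / 2)" for y q :: real
proof -
  have "\<bar>y\<bar>^2 * (1 + y^2) powr (q / 2 - 2) \<le> (1 + y^2) powr (q / 2 - 2 + real 2 / 2)" by (rule ypow)
  also have "\<dots> \<le> (1 + y^2) powr ((q - 1) / 2)" by (rule wmono) (simp add: field_simps)
  finally show ?thesis by simp
qed

lemma ya0: "(1 + y^2) powr (q / 2 - 1) \<le> (1 + y^2) powr ((q - 1) / 2)" for y q :: real
  by (rule wmono) (simp add: field_simps)

lemma ya3: "\<bar>y\<bar> * (1 + y^2) powr (q / 2 - 2) \<le> (1 + y^2) powr ((q - 1) / 2)" for y q :: real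
proof -
  have "\<bar>y\<bar>^1 * (1 + y^2) powr (q / 2 - 2) \<le> (1 + y^2) powr (q / 2 - 2 + real 1 / 2)" by (rule ypow)
  also have "\<dots> \<le> (1 + y^2) powr ((q - 1) / 2)" by (rule wmono) (simp add: field_simps)
  finally show ?thesis by simp
qed

lemma ya4: "\<bar>y\<bar>^3 * (1 + y^2) powr (q / 2 - 3) \<le> (1 + y^2) powr ((q - 1) / 2)" for y q :: real
proof -
  have "\<bar>y\<bar>^3 * (1 + y^2) powr (q / 2 - 3) \<le> (1 + y^2) powr (q / 2 - 3 + real 3 / 2)" by (rule ypow)
  also have "\<dots> \<le> (1 + y^2) powr ((q - 1) / 2)" by (rule wmono) (simp add: field_simps)
  finally show ?thesis .
qed

lemma mp1_bound:
  assumes q: "q \<ge> 1"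
  shows "\<bar>mp1 q y\<bar> \<le> Kq q * (1 + y^2) powr ((q - 1) / 2)"
proof -
  have q0: "q > 0" using q by simp
  have "\<bar>mp1 q y\<bar> = q * (\<bar>y\<bar> * (1 + y^2) powr (q / 2 - 1))" using q0 by (simp add: mp1_def abs_mult)
  also have "\<dots> \<le> q * (1 + y^2) powr ((q - 1) / 2)" using ya1[of y q] q0 by (intro mult_left_mono) auto
  also have "\<dots> \<le> Kq q * (1 + y^2) powr ((q - 1) / 2)" by (rule mult_right_mono[OF Kq_bounds(1)[OF q]]) simp
  finally show ?thesis .
qed

lemma mp2_bound:
  assumes q: "q \<ge> 1"
  shows "\<bar>mp2 q y\<bar> \<le> Kq q * (1 + y^2) powr ((q - 1) / 2)"
proof -
  let ?W = "(1 + y^2) powr ((q - 1) / 2)"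
  have q0: "q > 0" using q by simp
  have e1: "\<bar>q * (1 + y^2) powr (q / 2 - 1)\<bar> = q * (1 + y^2) powr (q / 2 - 1)" using q0 by simp
  have e2: "\<bar>q * (q - 2) * (y^2 * (1 + y^2) powr (q / 2 - 2))\<bar> = q * \<bar>q - 2\<bar> * (y^2 * (1 + y^2) powr (q / 2 - 2))"
    using q0 by (simp add: abs_mult)
  have "\<bar>mp2 q y\<bar> \<le> \<bar>q * (1 + y^2) powr (q / 2 - 1)\<bar> + \<bar>q * (q - 2) * (y^2 * (1 + y^2) powr (q / 2 - 2))\<bar>"
    unfolding mp2_def by (rule abs_triangle_ineq)
  also have "\<dots> = q * (1 + y^2) powr (q / 2 - 1) + q * \<bar>q - 2\<bar> * (y^2 * (1 + y^2) powr (q / 2 - 2))"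
    by (simp only: e1 e2)
  also have "\<dots> \<le> q * ?W + q * \<bar>q - 2\<bar> * ?W"
    using ya0[of y q] ya2[of y q] q0 by (intro add_mono mult_left_mono) auto
  also have "\<dots> = (q + q * \<bar>q - 2\<bar>) * ?W" by (simp add: algebra_simps)
  also have "\<dots> \<le> Kq q * ?W" by (rule mult_right_mono[OF Kq_bounds(2)[OF q]]) simp
  finally show ?thesis .
qed

lemma mp3_bound:
  assumes q: "q \<ge> 1"
  shows "\<bar>mp3 q y\<bar> \<le> Kq q * (1 + y^2) powr ((q - 1) / 2)"
proof -
  let ?W = "(1 + y^2) powr ((q - 1) / 2)"
  have q0: "q > 0" using q by simp
  have e1: "\<bar>3 * q * (q - 2) * (y * (1 + y^2) powr (q / 2 - 2))\<bar> = 3 * q * \<bar>q - 2\<bar> * (\<bar>y\<bar> * (1 + y^2) powr (q / 2 - 2))"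
    using q0 by (simp add: abs_mult)
  have e2: "\<bar>q * (q - 2) * (q - 4) * (y^3 * (1 + y^2) powr (q / 2 - 3))\<bar> = q * \<bar>q - 2\<bar> * \<bar>q - 4\<bar> * (\<bar>y\<bar>^3 * (1 + y^2) powr (q / 2 - 3))"
    using q0 by (simp add: abs_mult power_abs)
  have "\<bar>mp3 q y\<bar> \<le> \<bar>3 * q * (q - 2) * (y * (1 + y^2) powr (q / 2 - 2))\<bar> + \<bar>q * (q - 2) * (q - 4) * (y^3 * (1 + y^2) powr (q / 2 - 3))\<bar>"
    unfolding mp3_def by (rule abs_triangle_ineq)
  also have "\<dots> = 3 * q * \<bar>q - 2\<bar> * (\<bar>y\<bar> * (1 + y^2) powr (q / 2 - 2)) + q * \<bar>q - 2\<bar> * \<bar>q - 4\<bar> * (\<bar>y\<bar>^3 * (1 + y^2) powr (q / 2 - 3))"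
    by (simp only: e1 e2)
  also have "\<dots> \<le> 3 * q * \<bar>q - 2\<bar> * ?W + q * \<bar>q - 2\<bar> * \<bar>q - 4\<bar> * ?W"
    using ya3[of y q] ya4[of y q] q0 by (intro add_mono mult_left_mono) auto
  also have "\<dots> = (3 * q * \<bar>q - 2\<bar> + q * \<bar>q - 2\<bar> * \<bar>q - 4\<bar>) * ?W" by (simp add: algebra_simps)
  also have "\<dots> \<le> Kq q * ?W" by (rule mult_right_mono[OF Kq_bounds(3)[OF q]]) simp
  finally show ?thesis .
qed

lemma mp_growth:
  assumes q: "q \<ge> 1" and b: "\<And>y. \<bar>f y\<bar> \<le> Kq q * (1 + y^2) powr ((q - 1) / 2)"
  shows "\<bar>f y\<bar> \<le> (Kq q * 2 powr ((q - 1) / 2)) * (1 + npow \<bar>y\<bar> (q - 1))"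
proof -
  have K0: "Kq q \<ge> 0" using q by (simp add: Kq_def)
  have "\<bar>f y\<bar> \<le> Kq q * (1 + y^2) powr ((q - 1) / 2)" by (rule b)
  also have "\<dots> \<le> Kq q * (2 powr ((q - 1) / 2) * (1 + npow \<bar>y\<bar> (q - 1)))"
    using wbound[of "q - 1" y] q K0 by (intro mult_left_mono) auto
  finally show ?thesis by (simp add: mult.assoc)
qed

lemma mp0_cont: "continuous_on UNIV (mp0 q)"
  unfolding mp0_def[abs_def] by (intro continuous_intros ballI wne')

lemma mp0_ge: "0 \<le> mp0 q y" by (simp add: mp0_def)

lemma abs_powr_le_mp0: assumes q: "q > 0" shows "\<bar>s\<bar> powr q \<le> mp0 q s"
proof (cases "s = 0")
  case True then show ?thesis using q by (simp add: mp0_def)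
next
  case False
  have e: "s^2 = \<bar>s\<bar> powr 2" using False by (simp add: powr_realpow[symmetric])
  have pp: "(\<bar>s\<bar> powr 2) powr (q / 2) = \<bar>s\<bar> powr (2 * (q / 2))" by (rule powr_powr)
  have "\<bar>s\<bar> powr q = (\<bar>s\<bar> powr 2) powr (q / 2)" unfolding pp by simp
  also have "\<dots> = (s^2) powr (q / 2)" by (simp only: e)
  also have "\<dots> \<le> (1 + s^2) powr (q / 2)" using q by (intro powr_mono2) auto
  finally show ?thesis by (simp add: mp0_def)
qed

lemma npow_pos_exp: "r > 0 \<Longrightarrow> t \<ge> 0 \<Longrightarrow> npow t r = t powr r"
  by (simp add: npow_def)

lemma mom_of_dF:
  fixes Q :: "nat \<Rightarrow> 'a::euclidean_space measure"
  assumes q: "q \<ge> 1" and P: "P \<in> P_class q" and Q: "\<And>n. Q n \<in> P_class q"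
    and d: "(\<lambda>n. d_F q (Q n) P) \<longlonglongrightarrow> 0"
  shows "(\<lambda>n. \<integral>x. norm x powr q \<partial>Q n) \<longlonglongrightarrow> (\<integral>x. norm x powr q \<partial>P)"
proof -
  have q0: "q > 0" using q by simp
  have wc: "weak_conv Q P" by (rule weak_of_dF[OF q P Q d])
  define Hq where "Hq x = (\<Sum>b\<in>Basis. mp0 q (x \<bullet> b))" for x :: 'a
  have Hc: "continuous_on UNIV Hq" unfolding Hq_def
    by (intro continuous_intros continuous_on_compose2[OF mp0_cont]) auto
  have H0: "\<And>x. Hq x \<ge> 0" unfolding Hq_def by (intro sum_nonneg) (simp add: mp0_ge)
  define c where "c = real DIM('a) * 2 powr (q / 2)"
  have Hb: "\<bar>Hq x\<bar> \<le> c + c * norm x powr q" for x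
  proof -
    have "mp0 q (x \<bullet> b) \<le> 2 powr (q / 2) * (1 + norm x powr q)" if b: "b \<in> Basis" for b
    proof -
      have "mp0 q (x \<bullet> b) \<le> 2 powr (q / 2) * (1 + npow \<bar>x \<bullet> b\<bar> q)"
        unfolding mp0_def using wbound[of q "x \<bullet> b"] q0 by simp
      also have "npow \<bar>x \<bullet> b\<bar> q \<le> npow (norm x) q"
        by (rule npow_mono) (use b Basis_le_norm q0 in auto)
      hence "2 powr (q / 2) * (1 + npow \<bar>x \<bullet> b\<bar> q) \<le> 2 powr (q / 2) * (1 + npow (norm x) q)" by simp
      also have "npow (norm x) q = norm x powr q" by (rule npow_pos_exp[OF q0]) simp
      finally show ?thesis .
    qed
    hence "Hq x \<le> (\<Sum>b\<in>(Basis::'a set). 2 powr (q / 2) * (1 + norm x powr q))"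
      unfolding Hq_def by (intro sum_mono) auto
    also have "\<dots> = c + c * norm x powr q" by (simp add: c_def algebra_simps)
    finally show ?thesis using H0[of x] by simp
  qed
  have Hi: "integrable M Hq" if M: "M \<in> P_class q" for M
    by (rule integrable_growth[OF M meas_cont[OF PC_sets[OF M] Hc] Hb])
  define B where "B = Kq q * 2 powr ((q - 1) / 2)"
  have one: "(\<lambda>n. \<integral>x. mp0 q (b \<bullet> x) \<partial>Q n) \<longlonglongrightarrow> (\<integral>x. mp0 q (b \<bullet> x) \<partial>P)" for b :: 'a
  proof (rule ridge_conv[where ?\<psi>1.0="mp1 q" and ?\<psi>2.0="mp2 q" and ?\<psi>3.0="mp3 q" and B=B, OF q P Q d])
    show "(mp0 q has_real_derivative mp1 q y) (at y)" for y by (rule mp_d0)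
    show "(mp1 q has_real_derivative mp2 q y) (at y)" for y by (rule mp_d1)
    show "(mp2 q has_real_derivative mp3 q y) (at y)" for y by (rule mp_d2)
    show "continuous_on UNIV (mp3 q)" by (rule mp3_cont)
    show "0 \<le> B" using q by (simp add: B_def Kq_def)
    show "\<bar>mp1 q y\<bar> \<le> B * (1 + npow \<bar>y\<bar> (q - 1))" for y unfolding B_def by (rule mp_growth[OF q mp1_bound[OF q]])
    show "\<bar>mp2 q y\<bar> \<le> B * (1 + npow \<bar>y\<bar> (q - 1))" for y unfolding B_def by (rule mp_growth[OF q mp2_bound[OF q]])
    show "\<bar>mp3 q y\<bar> \<le> B * (1 + npow \<bar>y\<bar> (q - 1))" for y unfolding B_def by (rule mp_growth[OF q mp3_bound[OF q]])
  qed
  have inti: "integrable M (\<lambda>x. mp0 q (x \<bullet> b))" if M: "M \<in> P_class q" and b: "b \<in> Basis" for M and b :: 'a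
  proof (rule integrable_growth[OF M])
    show "(\<lambda>x. mp0 q (x \<bullet> b)) \<in> borel_measurable M"
      by (rule meas_cont[OF PC_sets[OF M]]) (intro continuous_intros continuous_on_compose2[OF mp0_cont], auto)
    fix x :: 'a
    have "mp0 q (x \<bullet> b) \<le> Hq x"
      unfolding Hq_def by (rule member_le_sum[OF b]) (auto simp: mp0_ge)
    hence "\<bar>mp0 q (x \<bullet> b)\<bar> \<le> \<bar>Hq x\<bar>" using mp0_ge[of q "x \<bullet> b"] H0[of x] by simp
    then show "\<bar>mp0 q (x \<bullet> b)\<bar> \<le> c + c * norm x powr q" using Hb[of x] by linarith
  qed
  have conv: "(\<lambda>n. \<integral>x. Hq x \<partial>Q n) \<longlonglongrightarrow> (\<integral>x. Hq x \<partial>P)"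
  proof -
    have "(\<lambda>n. \<Sum>b\<in>Basis. \<integral>x. mp0 q (x \<bullet> b) \<partial>Q n) \<longlonglongrightarrow> (\<Sum>b\<in>Basis. \<integral>x. mp0 q (x \<bullet> b) \<partial>P)"
      by (intro tendsto_sum) (use one in \<open>simp add: inner_commute\<close>)
    then show ?thesis unfolding Hq_def using inti[OF Q] inti[OF P] by (simp add: integral_sum)
  qed
  have tail: "tail_ok Hq Q P" by (rule tail_from_conv[OF P Q wc Hc H0 Hi[OF Q] Hi[OF P] conv])
  define C where "C = real DIM('a) powr q"
  have FH: "\<bar>norm x powr q\<bar> \<le> C * Hq x" for x :: 'a
  proof -
    define m where "m = Max ((\<lambda>b. \<bar>x \<bullet> b\<bar>) ` (Basis::'a set))"
    have "m \<in> (\<lambda>b. \<bar>x \<bullet> b\<bar>) ` (Basis::'a set)" unfolding m_def by (rule Max_in) auto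
    then obtain bm where bm: "bm \<in> Basis" "m = \<bar>x \<bullet> bm\<bar>" by auto
    have mge: "\<bar>x \<bullet> b\<bar> \<le> m" if "b \<in> Basis" for b unfolding m_def using that by (intro Max_ge) auto
    have "norm x \<le> (\<Sum>b\<in>Basis. \<bar>x \<bullet> b\<bar>)" by (rule norm_le_l1)
    also have "\<dots> \<le> (\<Sum>b\<in>(Basis::'a set). m)" by (intro sum_mono mge)
    also have "\<dots> = real DIM('a) * \<bar>x \<bullet> bm\<bar>" using bm by simp
    finally have nx: "norm x \<le> real DIM('a) * \<bar>x \<bullet> bm\<bar>" .
    have "norm x powr q \<le> (real DIM('a) * \<bar>x \<bullet> bm\<bar>) powr q" using nx q0 by (intro powr_mono2) auto
    also have "\<dots> = C * \<bar>x \<bullet> bm\<bar> powr q" by (simp add: C_def powr_mult)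
    also have "\<dots> \<le> C * mp0 q (x \<bullet> bm)" using abs_powr_le_mp0[OF q0] by (intro mult_left_mono) (auto simp: C_def)
    also have "\<dots> \<le> C * Hq x" unfolding Hq_def using bm mp0_ge
      by (intro mult_left_mono member_le_sum) (auto simp: C_def)
    finally show ?thesis by simp
  qed
  show ?thesis
    by (rule conv_growth[OF P Q wc Hc H0 Hi[OF Q] Hi[OF P] tail _ FH])
       (use cont_norm_powr q0 in \<open>auto simp: C_def\<close>)
qed


theorem mainTheorem1:
  fixes q :: real and P :: "'a::euclidean_space measure" and Q :: "nat \<Rightarrow> 'a measure"
  assumes "q \<ge> 1"
    and "P \<in> P_class q"
    and "\<And>n. Q n \<in> P_class q"
  shows "((\<lambda>n. d_F q (Q n) P) \<longlonglongrightarrow> 0) \<longleftrightarrow>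
         (weak_conv Q P \<and>
          (\<lambda>n. \<integral>x. norm x powr q \<partial>Q n) \<longlonglongrightarrow> (\<integral>x. norm x powr q \<partial>P))"
proof
  assume d: "(\<lambda>n. d_F q (Q n) P) \<longlonglongrightarrow> 0"
  show "weak_conv Q P \<and> (\<lambda>n. \<integral>x. norm x powr q \<partial>Q n) \<longlonglongrightarrow> (\<integral>x. norm x powr q \<partial>P)"
    using weak_of_dF[OF assms d] mom_of_dF[OF assms d] by blast
next
  assume h: "weak_conv Q P \<and> (\<lambda>n. \<integral>x. norm x powr q \<partial>Q n) \<longlonglongrightarrow> (\<integral>x. norm x powr q \<partial>P)"
  have wc: "weak_conv Q P" using h by blast
  have mom: "(\<lambda>n. \<integral>x. norm x powr q \<partial>Q n) \<longlonglongrightarrow> (\<integral>x. norm x powr q \<partial>P)" using h by blast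
  show "(\<lambda>n. d_F q (Q n) P) \<longlonglongrightarrow> 0"
    by (rule dir_b_a[where Q=Q, OF assms(1) assms(2) assms(3) wc mom])
qed

end
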